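(* Let $S$ be a monoid such that (i) $S$ satisfies $x\,y_1y_2\cdots y_n\,x\,y_ny_{n-1}\cdots y_1\approx x\,y_ny_{n-1}\cdots y_1\,x\,y_1y_2\cdots y_n$ for each $n>1$; (ii) $S$ does not satisfy the identity $xyxy\approx xyyx$; (iii) the words $xytyx$ and $xtyxy$ are isoterms for $S$. Then $S$ is non-finitely based.
   Context: All letters denote distinct variables of a countably infinite alphabet; words are elements of the free semigroup on it. A monoid $S$ satisfies an identity $\mathbf u\approx\mathbf v$ if both sides are equal under every evaluation of the variables in $S$. A word $\mathbf w$ is an isoterm for $S$ if $S$ satisfies no identity $\mathbf w\approx\mathbf w'$ with $\mathbf w'\ne\mathbf w$. $S$ is finitely based if all its identities are derivable from a finite subset of them; otherwise non-finitely based. *)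

theory Defs
  imports Main
begin

text \<open>Variables are natural numbers (a countably infinite alphabet); words are
  lists of variables. Semigroup words are the nonempty lists.\<close>

type_synonym word = "nat list"

definition eval_word :: "(nat \<Rightarrow> 'a::monoid_mult) \<Rightarrow> word \<Rightarrow> 'a" where
  "eval_word \<phi> w = prod_list (map \<phi> w)"

definition satisfies :: "'a::monoid_mult itself \<Rightarrow> word \<Rightarrow> word \<Rightarrow> bool" where
  "satisfies S u v \<longleftrightarrow> (\<forall>\<phi> :: nat \<Rightarrow> 'a. eval_word \<phi> u = eval_word \<phi> v)"

definition identities :: "'a::monoid_mult itself \<Rightarrow> (word \<times> word) set" where
  "identities S = {(u, v). u \<noteq> [] \<and> v \<noteq> [] \<and> satisfies S u v}"

definition isoterm :: "'a::monoid_mult itself \<Rightarrow> word \<Rightarrow> bool" where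
  "isoterm S w \<longleftrightarrow> (\<forall>w'. w' \<noteq> [] \<and> satisfies S w w' \<longrightarrow> w' = w)"

text \<open>Substitution of words for variables (monoid substitutions: a variable may be
  replaced by the empty word).\<close>
definition subst :: "(nat \<Rightarrow> word) \<Rightarrow> word \<Rightarrow> word" where
  "subst \<sigma> w = concat (map \<sigma> w)"

text \<open>Equational (monoid) derivability from a set of identities: the fully
  invariant congruence on the free monoid generated by the set.\<close>
inductive derivable :: "(word \<times> word) set \<Rightarrow> word \<Rightarrow> word \<Rightarrow> bool" for \<Sigma> where
  axiom: "(u, v) \<in> \<Sigma> \<Longrightarrow> derivable \<Sigma> u v"
| refl: "derivable \<Sigma> u u"
| sym: "derivable \<Sigma> u v \<Longrightarrow> derivable \<Sigma> v u"
| trans: "derivable \<Sigma> u v \<Longrightarrow> derivable \<Sigma> v w \<Longrightarrow> derivable \<Sigma> u w"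
| subst_ctx: "derivable \<Sigma> u v \<Longrightarrow> derivable \<Sigma> (p @ subst \<sigma> u @ q) (p @ subst \<sigma> v @ q)"

definition finitely_based :: "'a::monoid_mult itself \<Rightarrow> bool" where
  "finitely_based S \<longleftrightarrow>
     (\<exists>\<Sigma>. finite \<Sigma> \<and> \<Sigma> \<subseteq> identities S \<and>
          (\<forall>(u, v) \<in> identities S. derivable \<Sigma> u v))"

end

theory Submission
  imports Defs "HOL-Library.Multiset"
begin

lemma subst_Nil[simp]: "subst \<tau> [] = []" by (simp add: subst_def)
lemma subst_Cons[simp]: "subst \<tau> (z # u) = \<tau> z @ subst \<tau> u" by (simp add: subst_def)
lemma subst_append[simp]: "subst \<tau> (a @ b) = subst \<tau> a @ subst \<tau> b" by (simp add: subst_def)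
lemma subst_subst: "subst \<sigma> (subst \<tau> u) = subst (\<lambda>z. subst \<sigma> (\<tau> z)) u"
  by (induction u) auto
lemma subst_single: "subst (\<lambda>z. [f z]) u = map f u" by (induction u) auto
lemma subst_id: "subst (\<lambda>z. [z]) u = u" by (induction u) auto
lemma filter_subst: "filter P (subst \<tau> u) = subst (\<lambda>z. filter P (\<tau> z)) u"
  by (induction u) auto
lemma subst_filter_single: "subst (\<lambda>z. if z \<in> X then [z] else []) u = filter (\<lambda>z. z \<in> X) u"
  by (induction u) auto
lemma subst_cong: "(\<And>z. z \<in> set u \<Longrightarrow> \<tau> z = \<tau>' z) \<Longrightarrow> subst \<tau> u = subst \<tau>' u"
  by (induction u) auto
lemma subst_filter_nonempty: "subst \<tau> (filter (\<lambda>z. \<tau> z \<noteq> []) u) = subst \<tau> u"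
  by (induction u) auto
lemma subst_filter_sub: "(\<And>z. z \<in> set u \<Longrightarrow> \<tau> z \<noteq> [] \<Longrightarrow> z \<in> X) \<Longrightarrow>
   subst \<tau> (filter (\<lambda>z. z \<in> X) u) = subst \<tau> u"
  by (induction u) auto

lemma eval_append[simp]: "eval_word \<phi> (a @ b) = eval_word \<phi> a * eval_word \<phi> b"
  by (simp add: eval_word_def)
lemma eval_Nil[simp]: "eval_word \<phi> [] = 1" by (simp add: eval_word_def)
lemma eval_Cons[simp]: "eval_word \<phi> (z # b) = \<phi> z * eval_word \<phi> b"
  by (simp add: eval_word_def)
lemma eval_subst: "eval_word \<phi> (subst \<tau> u) = eval_word (\<lambda>z. eval_word \<phi> (\<tau> z)) u"
  by (induction u) (auto simp: mult.assoc)

lemma sat_refl: "satisfies S u u" by (simp add: satisfies_def)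
lemma sat_sym: "satisfies S u v \<Longrightarrow> satisfies S v u" by (simp add: satisfies_def)
lemma sat_trans: "satisfies S u v \<Longrightarrow> satisfies S v w \<Longrightarrow> satisfies S u w"
  by (simp add: satisfies_def)
lemma sat_subst: "satisfies S u v \<Longrightarrow> satisfies S (subst \<tau> u) (subst \<tau> v)"
  unfolding satisfies_def by (simp add: eval_subst)
lemma sat_ctx: "satisfies S u v \<Longrightarrow> satisfies S (p @ u @ q) (p @ v @ q)"
  unfolding satisfies_def by (simp add: mult.assoc)
lemma sat_filter: "satisfies S u v \<Longrightarrow> satisfies S (filter (\<lambda>z. z \<in> X) u) (filter (\<lambda>z. z \<in> X) v)"
  using sat_subst[of S u v "\<lambda>z. if z \<in> X then [z] else []"] by (simp add: subst_filter_single)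
lemma sat_map: "satisfies S u v \<Longrightarrow> satisfies S (map f u) (map f v)"
  using sat_subst[of S u v "\<lambda>z. [f z]"] by (simp add: subst_single)

definition rigid :: "'a::monoid_mult itself \<Rightarrow> word \<Rightarrow> bool" where
  "rigid S r \<longleftrightarrow> (\<forall>r'. satisfies S r r' \<longrightarrow> r' = r)"

lemma pair_det:
  assumes "set y \<union> set y' \<subseteq> A"
    and "\<And>a b. a \<in> A \<Longrightarrow> b \<in> A \<Longrightarrow> filter (\<lambda>z. z = a \<or> z = b) y = filter (\<lambda>z. z = a \<or> z = b) y'"
  shows "y = y'"
  using assms
proof (induction y arbitrary: y')
  case Nil
  show ?case
  proof (cases y')
    case (Cons c y2)
    then have "c \<in> A" using Nil by auto
    from Nil(2)[OF this this] Cons show ?thesis by simp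
  qed simp
next
  case (Cons c y1)
  then have cA: "c \<in> A" by auto
  from Cons(3)[OF cA cA] obtain c' y1' where y': "y' = c' # y1'"
    by (cases y') auto
  have c'A: "c' \<in> A" using Cons(2) y' by auto
  have "c = c'"
  proof (rule ccontr)
    assume ne: "c \<noteq> c'"
    from Cons(3)[OF cA c'A] y' ne show False by simp
  qed
  have "y1 = y1'"
  proof (rule Cons.IH)
    show "set y1 \<union> set y1' \<subseteq> A" using Cons(2) y' by auto
    fix a b assume "a \<in> A" "b \<in> A"
    from Cons(3)[OF this] y' \<open>c = c'\<close> show "filter (\<lambda>z. z = a \<or> z = b) y1 = filter (\<lambda>z. z = a \<or> z = b) y1'"
      by (auto split: if_splits)
  qed
  then show ?case using y' \<open>c = c'\<close> by simp
qed

lemma filter_filter_sub: "(\<And>z. P z \<Longrightarrow> Q z) \<Longrightarrow> filter P (filter Q y) = filter P y"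
  by (induction y) auto


fun permsn :: "nat \<Rightarrow> 'a list \<Rightarrow> 'a list list" where
  "permsn 0 xs = [[]]"
| "permsn (Suc n) xs = concat (map (\<lambda>x. map ((#) x) (permsn n (remove1 x xs))) (remdups xs))"

lemma permsn_complete: "mset y = mset xs \<Longrightarrow> y \<in> set (permsn (length xs) xs)"
proof (induction y arbitrary: xs)
  case Nil then show ?case by (cases xs) auto
next
  case (Cons a y)
  then have a: "a \<in> set xs" by (metis list.set_intros(1) set_mset_mset)
  have len: "length xs = Suc (length y)" using Cons(2) by (metis mset_eq_length length_Cons)
  have "mset y = mset (remove1 a xs)" using Cons(2) by (simp add: mset_remove1) (metis add_mset_remove_trivial)
  then have "y \<in> set (permsn (length (remove1 a xs)) (remove1 a xs))" by (rule Cons.IH)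
  moreover have "length (remove1 a xs) = length y" using a len by (simp add: length_remove1)
  ultimately show ?case using a len by auto
qed

lemma mset_from_pairs:
  assumes "set y \<subseteq> set r"
    and "\<And>a. a \<in> set r \<Longrightarrow> \<exists>b. filter (\<lambda>z. z \<in> {a,b}) y = filter (\<lambda>z. z \<in> {a,b}) r"
  shows "mset y = mset r"
proof (rule multiset_eqI)
  fix a
  show "count (mset y) a = count (mset r) a"
  proof (cases "a \<in> set r")
    case True
    then obtain b where b: "filter (\<lambda>z. z \<in> {a,b}) y = filter (\<lambda>z. z \<in> {a,b}) r" using assms(2) by blast
    have "count (mset y) a = count (mset (filter (\<lambda>z. z \<in> {a,b}) y)) a" by simp
    also have "\<dots> = count (mset (filter (\<lambda>z. z \<in> {a,b}) r)) a" using b by simp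
    also have "\<dots> = count (mset r) a" by simp
    finally show ?thesis .
  next
    case False
    then have "a \<notin> set y" using assms(1) by auto
    then show ?thesis using False by (metis count_mset_0_iff)
  qed
qed

lemma code_inj:
  assumes "\<And>a. a \<in> A \<Longrightarrow> \<tau> a \<noteq> []"
    and "\<And>a b. a \<in> A \<Longrightarrow> b \<in> A \<Longrightarrow> hd (\<tau> a) = hd (\<tau> b) \<Longrightarrow> a = b"
    and "set x \<subseteq> A" "set y \<subseteq> A" "subst \<tau> x = subst \<tau> y"
  shows "x = y"
  using assms(3-5)
proof (induction x arbitrary: y)
  case Nil
  then show ?case using assms(1) by (cases y) auto
next
  case (Cons a x)
  then show ?case
  proof (cases y)
    case Nil then show ?thesis using Cons assms(1) by auto
  next
    case (Cons b y')
    have aA: "a \<in> A" and bA: "b \<in> A" using Cons.prems Cons by auto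
    have "hd (\<tau> a) = hd (\<tau> b)"
      using Cons.prems(3) Cons assms(1)[OF aA] assms(1)[OF bA]
      by (cases "\<tau> a"; cases "\<tau> b") auto
    then have "a = b" using assms(2) aA bA by blast
    then show ?thesis using Cons.prems Cons Cons.IH by auto
  qed
qed

locale hyps =
  fixes S :: "'a::monoid_mult itself"
  assumes ii: "\<not> satisfies S [0, 1, 0, 1] [0, 1, 1, 0]"
    and iso1: "isoterm S [0, 1, 2, 1, 0]"
    and iso2: "isoterm S [0, 2, 1, 0, 1]"
    and i2: "satisfies S [0, 2, 3, 0, 3, 2] [0, 3, 2, 0, 2, 3]"
begin

lemma iso1_use: "satisfies S [0, 1, 2, 1, 0] y \<Longrightarrow> y \<noteq> [] \<Longrightarrow> y = [0, 1, 2, 1, 0]"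
  using iso1 unfolding isoterm_def by blast

lemma sat_nil: "satisfies S [] y \<Longrightarrow> y = []"
proof (rule ccontr)
  assume s: "satisfies S [] y" and ne: "y \<noteq> []"
  have "satisfies S (subst (\<lambda>_. [2]) []) (subst (\<lambda>_. [2]) y)" by (rule sat_subst[OF s])
  then have "satisfies S ([0,1,2] @ [] @ [1,0]) ([0,1,2] @ subst (\<lambda>_. [2]) y @ [1,0])"
    by (intro sat_ctx) simp
  then have "[0,1,2] @ subst (\<lambda>_. [2]) y @ [1,0] = [0,1,2,1,0]"
    by (intro iso1_use) auto
  moreover have "length (subst (\<lambda>_. [2::nat]) y) = length y"
    by (induction y) auto
  ultimately show False using ne by (cases y) auto
qed

lemma sat_nil': "satisfies S y [] \<Longrightarrow> y = []"
  using sat_nil sat_sym by blast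

lemma content: "satisfies S u v \<Longrightarrow> set v \<subseteq> set u"
proof
  fix z assume s: "satisfies S u v" and zv: "z \<in> set v"
  show "z \<in> set u"
  proof (rule ccontr)
    assume zu: "z \<notin> set u"
    let ?\<tau> = "\<lambda>x. if x = z then [z] else []"
    have "satisfies S (subst ?\<tau> u) (subst ?\<tau> v)" by (rule sat_subst[OF s])
    moreover have "subst ?\<tau> u = []" using zu by (induction u) auto
    moreover have "subst ?\<tau> v \<noteq> []" using zv by (induction v) auto
    ultimately show False using sat_nil by auto
  qed
qed

lemma rigid_use: "rigid S r \<Longrightarrow> satisfies S r y \<Longrightarrow> y = r"
  unfolding rigid_def by blast

lemma rigid_nil: "rigid S []"
  unfolding rigid_def using sat_nil by blast

lemma rigid_of_iso: "isoterm S r \<Longrightarrow> r \<noteq> [] \<Longrightarrow> rigid S r"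
  unfolding rigid_def
proof (intro allI impI)
  fix r' assume i: "isoterm S r" and ne: "r \<noteq> []" and s: "satisfies S r r'"
  show "r' = r"
  proof (cases "r' = []")
    case True then show ?thesis using s sat_nil' ne by simp
  next
    case False then show ?thesis using i s unfolding isoterm_def by blast
  qed
qed

lemma rigid_rename:
  assumes r: "rigid S r" and d: "distinct ys" and sr: "set r \<subseteq> {..<length ys}"
  shows "rigid S (map (nth ys) r)"
  unfolding rigid_def
proof (intro allI impI)
  fix y assume s: "satisfies S (map (nth ys) r) y"
  let ?g = "inv_into {..<length ys} (nth ys)"
  have inj: "inj_on (nth ys) {..<length ys}" using d by (simp add: inj_on_nth)
  have "set y \<subseteq> set (map (nth ys) r)" using content[OF s] .
  also have "\<dots> \<subseteq> set ys" using sr by (auto intro!: nth_mem)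
  finally have sy: "set y \<subseteq> set ys" .
  have e1: "map ?g (map (nth ys) r) = r"
    using sr by (induction r) (auto simp: inv_into_f_f[OF inj])
  from sat_map[OF s, of ?g] have "satisfies S r (map ?g y)" unfolding e1 .
  then have "map ?g y = r" by (rule rigid_use[OF r])
  then have "map (nth ys) (map ?g y) = map (nth ys) r" by simp
  moreover have "map (nth ys) (map ?g y) = y"
  proof -
    have "\<forall>x\<in>set y. ys ! (?g x) = x"
    proof
      fix x assume "x \<in> set y"
      then have "x \<in> set ys" using sy by auto
      then have "x \<in> nth ys ` {..<length ys}" by (auto simp: in_set_conv_nth)
      then show "ys ! (?g x) = x" by (rule f_inv_into_f)
    qed
    then show ?thesis by (induction y) auto
  qed
  ultimately show "y = map (nth ys) r" by simp
qed

lemma rigid_pairs: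
  assumes two: "\<exists>a\<in>set x. \<exists>b\<in>set x. a \<noteq> b"
    and pr: "\<And>a b. a \<in> set x \<Longrightarrow> b \<in> set x \<Longrightarrow> a \<noteq> b \<Longrightarrow>
              \<exists>X. a \<in> X \<and> b \<in> X \<and> rigid S (filter (\<lambda>z. z \<in> X) x)"
  shows "rigid S x"
  unfolding rigid_def
proof (intro allI impI)
  fix y assume s: "satisfies S x y"
  have sy: "set y \<subseteq> set x" using content[OF s] .
  have pairs: "filter (\<lambda>z. z = a \<or> z = b) y = filter (\<lambda>z. z = a \<or> z = b) x"
    if ab: "a \<in> set x" "b \<in> set x" "a \<noteq> b" for a b
  proof -
    obtain X where X: "a \<in> X" "b \<in> X" "rigid S (filter (\<lambda>z. z \<in> X) x)" using pr[OF ab] by blast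
    have "filter (\<lambda>z. z \<in> X) y = filter (\<lambda>z. z \<in> X) x"
      using rigid_use[OF X(3) sat_filter[OF s]] .
    then have "filter (\<lambda>z. z = a \<or> z = b) (filter (\<lambda>z. z \<in> X) y) =
               filter (\<lambda>z. z = a \<or> z = b) (filter (\<lambda>z. z \<in> X) x)" by simp
    moreover have e: "filter (\<lambda>z. z = a \<or> z = b) (filter (\<lambda>z. z \<in> X) t) = filter (\<lambda>z. z = a \<or> z = b) t" for t
      using X(1,2) by (intro filter_filter_sub) auto
    ultimately show ?thesis by metis
  qed
  show "y = x"
  proof (rule pair_det[where A = "set x"])
    show "set y \<union> set x \<subseteq> set x" using sy by auto
    fix a b assume a: "a \<in> set x" and b: "b \<in> set x"
    show "filter (\<lambda>z. z = a \<or> z = b) y = filter (\<lambda>z. z = a \<or> z = b) x"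
    proof (cases "a = b")
      case False then show ?thesis using pairs a b by blast
    next
      case True
      obtain a' b' where ab': "a' \<in> set x" "b' \<in> set x" "a' \<noteq> b'" using two by blast
      define c where "c = (if a' = a then b' else a')"
      have c: "c \<in> set x" "c \<noteq> a" using ab' unfolding c_def by auto
      have "filter (\<lambda>z. z = a \<or> z = c) y = filter (\<lambda>z. z = a \<or> z = c) x"
        using pairs[OF a c(1)] c(2) by auto
      then have "filter (\<lambda>z. z = a) (filter (\<lambda>z. z = a \<or> z = c) y) =
                 filter (\<lambda>z. z = a) (filter (\<lambda>z. z = a \<or> z = c) x)" by simp
      moreover have e: "filter (\<lambda>z. z = a) (filter (\<lambda>z. z = a \<or> z = c) t) = filter (\<lambda>z. z = a) t" for t
        by (intro filter_filter_sub) auto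
      ultimately show ?thesis using True by (metis (no_types, lifting) filter_cong)
    qed
  qed
qed

lemma R0: "rigid S [0]"
  unfolding rigid_def
proof (intro allI impI)
  fix y assume s: "satisfies S [0] y"
  have sy: "set y \<subseteq> {0}" using content[OF s] by simp
  have ne: "y \<noteq> []" using s sat_nil' by force
  have yr: "y = replicate (length y) 0" using sy by (induction y) auto
  show "y = [0]"
  proof (rule ccontr)
    assume "y \<noteq> [0]"
    then have l2: "length y \<ge> 2" using ne yr by (cases y; cases "tl y") auto
    let ?\<tau> = "\<lambda>_::nat. [2::nat]"
    have "satisfies S ([0,1] @ subst ?\<tau> [0] @ [1,0]) ([0,1] @ subst ?\<tau> y @ [1,0])"
      by (intro sat_ctx sat_subst s)
    then have "[0,1] @ subst ?\<tau> y @ [1,0] = [0,1,2,1,0]" by (intro iso1_use) auto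
    moreover have "length (subst ?\<tau> y) = length y" by (induction y) auto
    ultimately have "length y + 4 = 5" by simp
    then show False using l2 by simp
  qed
qed

lemma R1: "rigid S [0,1]"
  unfolding rigid_def
proof (intro allI impI)
  fix y assume s: "satisfies S [0,1] y"
  have sy: "set y \<subseteq> set [0,1::nat]" using content[OF s] by simp
  have f0: "filter (\<lambda>z. z \<in> {0}) y = [0]"
    using rigid_use[OF R0] sat_filter[OF s, of "{0}"] by simp
  have r1: "rigid S [1]" using rigid_rename[OF R0, of "[1]"] by simp
  have f1: "filter (\<lambda>z. z \<in> {1}) y = [1]"
    using rigid_use[OF r1] sat_filter[OF s, of "{1}"] by simp
  have "mset y = mset [0,1::nat]"
  proof (rule mset_from_pairs[OF sy])
    fix a assume "a \<in> set [0,1::nat]"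
    then have "a = 0 \<or> a = 1" by simp
    then show "\<exists>b. filter (\<lambda>z. z \<in> {a, b}) y = filter (\<lambda>z. z \<in> {a, b}) [0, 1]"
    proof
      assume "a = 0" then show ?thesis using f0 by (intro exI[of _ 0]) simp
    next
      assume "a = 1" then show ?thesis using f1 by (intro exI[of _ 1]) simp
    qed
  qed
  from permsn_complete[OF this] have "y \<in> set (permsn (length [0,1::nat]) [0,1])" .
  then have "y = [0,1] \<or> y = [1,0]" by simp
  moreover have "y \<noteq> [1,0]"
  proof
    assume "y = [1,0]"
    then have "satisfies S ([0,1] @ [0,1] @ []) ([0,1] @ [1,0] @ [])" using sat_ctx s by blast
    then show False using ii by simp
  qed
  ultimately show "y = [0,1]" by blast
qed

lemma R2: "rigid S [0,1,0]"
  unfolding rigid_def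
proof (intro allI impI)
  fix y assume s: "satisfies S [0,1,0] y"
  have sy: "set y \<subseteq> {0,1}" using content[OF s] by auto
  let ?\<tau> = "\<lambda>z::nat. if z = 0 then [0::nat] else [1,2,1]"
  have "satisfies S (subst ?\<tau> [0,1,0]) (subst ?\<tau> y)" by (rule sat_subst[OF s])
  then have "subst ?\<tau> y = [0,1,2,1,0]"
    using rigid_use[OF rigid_of_iso[OF iso1]] by simp
  then have "subst ?\<tau> y = subst ?\<tau> [0,1,0]" by simp
  then show "y = [0,1,0]"
  proof (rule code_inj[where A = "{0,1}" and \<tau> = ?\<tau>, rotated 4])
    show "set y \<subseteq> {0,1}" by (rule sy)
    show "set [0,1,0::nat] \<subseteq> {0,1}" by simp
    fix a b :: nat assume "a \<in> {0,1}" "b \<in> {0,1}" "hd (?\<tau> a) = hd (?\<tau> b)"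
    then show "a = b" by (auto split: if_splits)
  qed simp
qed

end

lemma filter_sub_eq: "filter (\<lambda>z. z \<in> X) y = t \<Longrightarrow> B \<subseteq> X \<Longrightarrow>
   filter (\<lambda>z. z \<in> B) y = filter (\<lambda>z. z \<in> B) t"
proof -
  assume f: "filter (\<lambda>z. z \<in> X) y = t" and b: "B \<subseteq> X"
  have "filter (\<lambda>z. z \<in> B) (filter (\<lambda>z. z \<in> X) y) = filter (\<lambda>z. z \<in> B) y"
    by (rule filter_filter_sub) (use b in auto)
  then show ?thesis using f by metis
qed

lemma filter_sub_eq2: "filter (\<lambda>z. z \<in> X) y = filter (\<lambda>z. z \<in> X) r \<Longrightarrow> B \<subseteq> X \<Longrightarrow>
   filter (\<lambda>z. z \<in> B) y = filter (\<lambda>z. z \<in> B) r"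
proof -
  assume f: "filter (\<lambda>z. z \<in> X) y = filter (\<lambda>z. z \<in> X) r" and b: "B \<subseteq> X"
  have "filter (\<lambda>z. z \<in> B) (filter (\<lambda>z. z \<in> X) t) = filter (\<lambda>z. z \<in> B) t" for t
    by (rule filter_filter_sub) (use b in auto)
  then show ?thesis using f by metis
qed

lemma mset_from_cover:
  assumes "set y \<subseteq> set r" "set r \<subseteq> \<Union>(set Xs)"
    "\<forall>X\<in>set Xs. filter (\<lambda>z. z \<in> X) y = filter (\<lambda>z. z \<in> X) r"
  shows "mset y = mset r"
proof (rule mset_from_pairs[OF assms(1)])
  fix a assume "a \<in> set r"
  then obtain X where X: "X \<in> set Xs" "a \<in> X" using assms(2) by blast
  have "filter (\<lambda>z. z \<in> X) y = filter (\<lambda>z. z \<in> X) r" using assms(3) X(1) by blast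
  then have "filter (\<lambda>z. z \<in> {a,a}) y = filter (\<lambda>z. z \<in> {a,a}) r"
    by (rule filter_sub_eq2) (use X(2) in simp)
  then show "\<exists>b. filter (\<lambda>z. z \<in> {a, b}) y = filter (\<lambda>z. z \<in> {a, b}) r" by blast
qed

lemma enum0:
  assumes "set y \<subseteq> set r" "set r \<subseteq> \<Union>(set Xs)"
    "\<forall>X\<in>set Xs. filter (\<lambda>z. z \<in> X) y = filter (\<lambda>z. z \<in> X) r"
  shows "y \<in> set (permsn (length r) r)"
  using permsn_complete[OF mset_from_cover[OF assms]] .

lemma enum_filter: "y \<in> set xs \<Longrightarrow> P y \<Longrightarrow> filter P xs = [r] \<Longrightarrow> y = r"
proof -
  assume a: "y \<in> set xs" "P y" and f: "filter P xs = [r]"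
  from a have "y \<in> set (filter P xs)" by simp
  then show "y = r" unfolding f by simp
qed

lemma enum_filter_set: "y \<in> set xs \<Longrightarrow> P y \<Longrightarrow> filter P xs = rs \<Longrightarrow> y \<in> set rs"
  by auto

lemma pd_cover:
  assumes "set y \<subseteq> set r"
    and "\<forall>a\<in>set r. \<forall>b\<in>set r. \<exists>X\<in>set Xs. a \<in> X \<and> b \<in> X"
    and "\<forall>X\<in>set Xs. filter (\<lambda>z. z \<in> X) y = filter (\<lambda>z. z \<in> X) r"
  shows "y = r"
proof (rule pair_det[where A = "set r"])
  show "set y \<union> set r \<subseteq> set r" using assms(1) by auto
  fix a b assume "a \<in> set r" "b \<in> set r"
  then obtain X where X: "X \<in> set Xs" "a \<in> X" "b \<in> X" using assms(2) by blast
  have "filter (\<lambda>z. z \<in> X) y = filter (\<lambda>z. z \<in> X) r" using assms(3) X(1) by blast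
  then have "filter (\<lambda>z. z \<in> {a,b}) y = filter (\<lambda>z. z \<in> {a,b}) r"
    by (rule filter_sub_eq2) (use X(2,3) in simp)
  then show "filter (\<lambda>z. z = a \<or> z = b) y = filter (\<lambda>z. z = a \<or> z = b) r" by simp
qed

lemma filter_distinct_none: "X \<inter> set xs = {} \<Longrightarrow> filter (\<lambda>z. z \<in> X) xs = []"
  by (induction xs) auto

lemma distinct_set_one: "distinct ys \<Longrightarrow> set ys = {a} \<Longrightarrow> ys = [a]"
proof (cases ys)
  case (Cons b ys')
  assume d: "distinct ys" and s: "set ys = {a}"
  then have "b = a" "set ys' \<subseteq> {a}" "a \<notin> set ys'" using Cons by auto
  then have "ys' = []" by (cases ys') auto
  then show ?thesis using Cons \<open>b = a\<close> by simp
qed simp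

lemma distinct_set_two: "distinct ys \<Longrightarrow> set ys = {a,b} \<Longrightarrow> a \<noteq> b \<Longrightarrow> ys = [a,b] \<or> ys = [b,a]"
proof -
  assume d: "distinct ys" and s: "set ys = {a,b}" and ab: "a \<noteq> b"
  have "length ys = 2" using distinct_card[OF d] s ab by simp
  then obtain c e where ys: "ys = [c,e]"
    by (auto simp: numeral_2_eq_2 length_Suc_conv)
  then show ?thesis using s d ab by (simp add: doubleton_eq_iff)
qed

lemma filter_distinct_one: "distinct xs \<Longrightarrow> X \<inter> set xs = {a} \<Longrightarrow> filter (\<lambda>z. z \<in> X) xs = [a]"
  by (rule distinct_set_one) auto

lemma filter_distinct_two: "distinct xs \<Longrightarrow> a \<in> set xs \<Longrightarrow> b \<in> set xs \<Longrightarrow> a \<noteq> b \<Longrightarrow>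
  filter (\<lambda>z. z \<in> {a,b}) xs = [a,b] \<or> filter (\<lambda>z. z \<in> {a,b}) xs = [b,a]"
  by (rule distinct_set_two) auto

context hyps begin

lemma rfeq: "satisfies S x y \<Longrightarrow> rigid S (filter (\<lambda>z. z \<in> X) x) \<Longrightarrow>
   filter (\<lambda>z. z \<in> X) y = filter (\<lambda>z. z \<in> X) x"
  by (rule rigid_use[OF _ sat_filter])

lemma rfeq2: "satisfies S x y \<Longrightarrow> rigid S r \<Longrightarrow> filter (\<lambda>z. z \<in> X) y = r \<Longrightarrow>
   filter (\<lambda>z. z \<in> X) x = r"
proof -
  assume s: "satisfies S x y" and r: "rigid S r" and f: "filter (\<lambda>z. z \<in> X) y = r"
  have "satisfies S r (filter (\<lambda>z. z \<in> X) x)" using sat_sym[OF sat_filter[OF s, of X]] f by simp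
  then show ?thesis by (rule rigid_use[OF r])
qed

lemma rigid_ren: "rigid S r \<Longrightarrow> distinct ys \<Longrightarrow> set r \<subseteq> {..<length ys} \<Longrightarrow> x = map (nth ys) r \<Longrightarrow> rigid S x"
  using rigid_rename by blast

lemma R3: "rigid S [0,1,2,1,0]" by (rule rigid_of_iso[OF iso1]) simp

lemma R4: "rigid S [0,1,2,0,2]"
  using rigid_rename[OF rigid_of_iso[OF iso2], of "[0,2,1]"] by simp

lemma R5: "rigid S [0,1,0,2]"
  unfolding rigid_def
proof (intro allI impI)
  fix y assume s: "satisfies S [0,1,0,2] y"
  have sy: "set y \<subseteq> set [0,1,0,2::nat]" using content[OF s] by simp
  have f01: "filter (\<lambda>z. z \<in> {0,1}) y = filter (\<lambda>z. z \<in> {0,1}) [0,1,0,2]"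
    by (rule rfeq[OF s]) (use R2 in simp)
  have f12: "filter (\<lambda>z. z \<in> {1,2}) y = filter (\<lambda>z. z \<in> {1,2}) [0,1,0,2]"
    by (rule rfeq[OF s]) (use rigid_ren[OF R1, of "[1,2]"] in simp)
  have r: "rigid S [0,2,0]" using rigid_rename[OF R2, of "[0,2]"] by simp
  have ex: "filter (\<lambda>z. z \<in> {0,2}) y \<noteq> [0,2,0]"
    using rfeq2[OF s r, of "{0,2}"] by auto
  have "y \<in> set (permsn (length [0,1,0,2::nat]) [0,1,0,2])"
    by (rule enum0[OF sy, of "[{0,1},{1,2}]"]) (use f01 f12 in auto)
  then show "y = [0,1,0,2]"
    by (rule enum_filter[where P = "\<lambda>y::nat list. filter (\<lambda>z. z \<in> {0,1}) y = [0,1,0] \<and>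
     filter (\<lambda>z. z \<in> {1,2}) y = [1,2] \<and> filter (\<lambda>z. z \<in> {0,2}) y \<noteq> [0,2,0]"])
      (use f01 f12 ex in simp, code_simp)
qed

lemma R5b: "rigid S [0,1,2,1]"
  unfolding rigid_def
proof (intro allI impI)
  fix y assume s: "satisfies S [0,1,2,1] y"
  have sy: "set y \<subseteq> set [0,1,2,1::nat]" using content[OF s] by simp
  have f12: "filter (\<lambda>z. z \<in> {1,2}) y = filter (\<lambda>z. z \<in> {1,2}) [0,1,2,1]"
    by (rule rfeq[OF s]) (use rigid_ren[OF R2, of "[1,2]"] in simp)
  have f02: "filter (\<lambda>z. z \<in> {0,2}) y = filter (\<lambda>z. z \<in> {0,2}) [0,1,2,1]"
    by (rule rfeq[OF s]) (use rigid_ren[OF R1, of "[0,2]"] in simp)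
  have r: "rigid S [1,0,1]" using rigid_rename[OF R2, of "[1,0]"] by simp
  have ex: "filter (\<lambda>z. z \<in> {0,1}) y \<noteq> [1,0,1]"
    using rfeq2[OF s r, of "{0,1}"] by auto
  have "y \<in> set (permsn (length [0,1,2,1::nat]) [0,1,2,1])"
    by (rule enum0[OF sy, of "[{1,2},{0,2}]"]) (use f12 f02 in auto)
  then show "y = [0,1,2,1]"
    by (rule enum_filter[where P = "\<lambda>y::nat list. filter (\<lambda>z. z \<in> {1,2}) y = [1,2,1] \<and>
     filter (\<lambda>z. z \<in> {0,2}) y = [0,2] \<and> filter (\<lambda>z. z \<in> {0,1}) y \<noteq> [1,0,1]"])
      (use f12 f02 ex in simp, code_simp)
qed

lemma R7: "rigid S [0,1,2,0,2,3]"
  unfolding rigid_def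
proof (intro allI impI)
  fix y assume s: "satisfies S [0,1,2,0,2,3] y"
  have sy: "set y \<subseteq> set [0,1,2,0,2,3::nat]" using content[OF s] by simp
  have f1: "filter (\<lambda>z. z \<in> {0,1,2}) y = filter (\<lambda>z. z \<in> {0,1,2}) [0,1,2,0,2,3]"
    by (rule rfeq[OF s]) (use R4 in simp)
  have f2: "filter (\<lambda>z. z \<in> {0,1,3}) y = filter (\<lambda>z. z \<in> {0,1,3}) [0,1,2,0,2,3]"
    by (rule rfeq[OF s]) (use rigid_ren[OF R5, of "[0,1,3]"] in simp)
  have r: "rigid S [2,3,2]" using rigid_rename[OF R2, of "[2,3]"] by simp
  have ex: "filter (\<lambda>z. z \<in> {2,3}) y \<noteq> [2,3,2]"
    using rfeq2[OF s r, of "{2,3}"] by auto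
  have "y \<in> set (permsn (length [0,1,2,0,2,3::nat]) [0,1,2,0,2,3])"
    by (rule enum0[OF sy, of "[{0,1,2},{0,1,3}]"]) (use f1 f2 in auto)
  then show "y = [0,1,2,0,2,3]"
    by (rule enum_filter[where P = "\<lambda>y::nat list. filter (\<lambda>z. z \<in> {0,1,2}) y = [0,1,2,0,2] \<and>
     filter (\<lambda>z. z \<in> {0,1,3}) y = [0,1,0,3] \<and> filter (\<lambda>z. z \<in> {2,3}) y \<noteq> [2,3,2]"])
      (use f1 f2 ex in simp, code_simp)
qed


lemma N2: "\<not> satisfies S [0,1,2,0,1] [1,0,2,0,1]"
proof
  assume s: "satisfies S [0,1,2,0,1] [1,0,2,0,1]"
  let ?f = "\<lambda>z::nat. if z = 0 then 1 else if z = 1 then 0 else z"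
  have "satisfies S (map ?f [0,1,2,0,1]) (map ?f [1,0,2,0,1])" by (rule sat_map[OF s])
  then have "satisfies S [0,1,2,1,0] [1,0,2,1,0]" using sat_sym by simp
  then show False using rigid_use[OF R3] by fastforce
qed

lemma R8: "rigid S [0,1,2,0,3,1]"
  unfolding rigid_def
proof (intro allI impI)
  fix y assume s: "satisfies S [0,1,2,0,3,1] y"
  have sy: "set y \<subseteq> set [0,1,2,0,3,1::nat]" using content[OF s] by simp
  have r1: "rigid S [0,2,0,3]" using rigid_rename[OF R5, of "[0,2,3]"] by simp
  have r2: "rigid S [1,2,1]" using rigid_rename[OF R2, of "[1,2]"] by simp
  have r3: "rigid S [1,3,1]" using rigid_rename[OF R2, of "[1,3]"] by simp
  have f1: "filter (\<lambda>z. z \<in> {0,2,3}) y = filter (\<lambda>z. z \<in> {0,2,3}) [0,1,2,0,3,1]"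
    by (rule rfeq[OF s]) (use r1 in simp)
  have f2: "filter (\<lambda>z. z \<in> {1,2}) y = filter (\<lambda>z. z \<in> {1,2}) [0,1,2,0,3,1]"
    by (rule rfeq[OF s]) (use r2 in simp)
  have f3: "filter (\<lambda>z. z \<in> {1,3}) y = filter (\<lambda>z. z \<in> {1,3}) [0,1,2,0,3,1]"
    by (rule rfeq[OF s]) (use r3 in simp)
  have ex: "filter (\<lambda>z. z \<in> {0,1,2}) y \<noteq> [1,0,2,0,1]"
  proof
    assume "filter (\<lambda>z. z \<in> {0,1,2}) y = [1,0,2,0,1]"
    then have "satisfies S [0,1,2,0,1] [1,0,2,0,1]" using sat_filter[OF s, of "{0,1,2}"] by simp
    then show False using N2 by simp
  qed
  have "y \<in> set (permsn (length [0,1,2,0,3,1::nat]) [0,1,2,0,3,1])"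
    by (rule enum0[OF sy, of "[{0,2,3},{1,2}]"]) (use f1 f2 in auto)
  then show "y = [0,1,2,0,3,1]"
    by (rule enum_filter[where P = "\<lambda>y::nat list. filter (\<lambda>z. z \<in> {0,2,3}) y = [0,2,0,3] \<and>
     filter (\<lambda>z. z \<in> {1,2}) y = [1,2,1] \<and> filter (\<lambda>z. z \<in> {1,3}) y = [1,3,1] \<and>
     filter (\<lambda>z. z \<in> {0,1,2}) y \<noteq> [1,0,2,0,1]"])
      (use f1 f2 f3 ex in simp, code_simp)
qed

lemma R9: "rigid S [0,1,2,3,0,3,4,1]"
  unfolding rigid_def
proof (intro allI impI)
  fix y assume s: "satisfies S [0,1,2,3,0,3,4,1] y"
  have sy: "set y \<subseteq> set [0,1,2,3,0,3,4,1::nat]" using content[OF s] by simp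
  have r1: "rigid S [0,1,2,0,4,1]" using rigid_rename[OF R8, of "[0,1,2,4]"] by simp
  have r2: "rigid S [0,2,3,0,3,4]" using rigid_rename[OF R7, of "[0,2,3,4]"] by simp
  have f1: "filter (\<lambda>z. z \<in> {0,1,2,4}) y = filter (\<lambda>z. z \<in> {0,1,2,4}) [0,1,2,3,0,3,4,1]"
    by (rule rfeq[OF s]) (use r1 in simp)
  have f2: "filter (\<lambda>z. z \<in> {0,2,3,4}) y = filter (\<lambda>z. z \<in> {0,2,3,4}) [0,1,2,3,0,3,4,1]"
    by (rule rfeq[OF s]) (use r2 in simp)
  define z where "z = filter (\<lambda>z. z \<in> {1,2,3,4}) y"
  have zf: "filter (\<lambda>x. x \<in> B) z = filter (\<lambda>x. x \<in> B) y" if "B \<subseteq> {1,2,3,4}" for B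
    unfolding z_def by (rule filter_filter_sub) (use that in auto)
  have g12: "filter (\<lambda>z. z \<in> {1,2}) y = [1,2,1]" using filter_sub_eq2[OF f1, of "{1,2}"] by simp
  have g14: "filter (\<lambda>z. z \<in> {1,4}) y = [1,4,1]" using filter_sub_eq2[OF f1, of "{1,4}"] by simp
  have g24: "filter (\<lambda>z. z \<in> {2,4}) y = [2,4]" using filter_sub_eq2[OF f1, of "{2,4}"] by simp
  have g23: "filter (\<lambda>z. z \<in> {2,3}) y = [2,3,3]" using filter_sub_eq2[OF f2, of "{2,3}"] by simp
  have g34: "filter (\<lambda>z. z \<in> {3,4}) y = [3,3,4]" using filter_sub_eq2[OF f2, of "{3,4}"] by simp
  have h12: "filter (\<lambda>x. x \<in> {1,2}) z = [1,2,1]" using zf[of "{1,2}"] g12 by simp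
  have h14: "filter (\<lambda>x. x \<in> {1,4}) z = [1,4,1]" using zf[of "{1,4}"] g14 by simp
  have h24: "filter (\<lambda>x. x \<in> {2,4}) z = [2,4]" using zf[of "{2,4}"] g24 by simp
  have h23: "filter (\<lambda>x. x \<in> {2,3}) z = [2,3,3]" using zf[of "{2,3}"] g23 by simp
  have h34: "filter (\<lambda>x. x \<in> {3,4}) z = [3,3,4]" using zf[of "{3,4}"] g34 by simp
  have sz: "set z \<subseteq> set [1,2,3,3,4,1::nat]" using sy unfolding z_def by auto
  have "z \<in> set (permsn (length [1,2,3,3,4,1::nat]) [1,2,3,3,4,1])"
    by (rule enum0[OF sz, of "[{1,2},{3,4}]"]) (use h12 h34 in auto)
  then have zz: "z = [1,2,3,3,4,1]"
    by (rule enum_filter[where P = "\<lambda>y::nat list. filter (\<lambda>z. z \<in> {1,2}) y = [1,2,1] \<and>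
     filter (\<lambda>z. z \<in> {1,4}) y = [1,4,1] \<and> filter (\<lambda>z. z \<in> {2,4}) y = [2,4] \<and>
     filter (\<lambda>z. z \<in> {2,3}) y = [2,3,3] \<and> filter (\<lambda>z. z \<in> {3,4}) y = [3,3,4]"])
      (use h12 h14 h24 h23 h34 in simp, code_simp)
  have f3: "filter (\<lambda>z. z \<in> {1,2,3,4}) y = filter (\<lambda>z. z \<in> {1,2,3,4}) [0,1,2,3,0,3,4,1]"
    using zz unfolding z_def by simp
  show "y = [0,1,2,3,0,3,4,1]"
    by (rule pd_cover[OF sy, of "[{0,1,2,4},{0,2,3,4},{1,2,3,4}]"]) (use f1 f2 f3 in auto)
qed

lemma EX: "satisfies S [0,1,2,3,0,3,2] y \<Longrightarrow>
   filter (\<lambda>z. z \<in> {2,3}) y = [2,3,3,2] \<or> filter (\<lambda>z. z \<in> {2,3}) y = [3,2,2,3]"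
proof -
  assume s: "satisfies S [0,1,2,3,0,3,2] y"
  have sy: "set y \<subseteq> set [0,1,2,3,0,3,2::nat]" using content[OF s] by simp
  have r2: "rigid S [0,1,3,0,3]" using rigid_rename[OF R4, of "[0,1,3]"] by simp
  have f1: "filter (\<lambda>z. z \<in> {0,1,2}) y = filter (\<lambda>z. z \<in> {0,1,2}) [0,1,2,3,0,3,2]"
    by (rule rfeq[OF s]) (use R4 in simp)
  have f2: "filter (\<lambda>z. z \<in> {0,1,3}) y = filter (\<lambda>z. z \<in> {0,1,3}) [0,1,2,3,0,3,2]"
    by (rule rfeq[OF s]) (use r2 in simp)
  define z where "z = filter (\<lambda>z. z \<in> {0,2,3}) y"
  have sz0: "satisfies S [0,2,3,0,3,2] z" using sat_filter[OF s, of "{0,2,3}"] unfolding z_def by simp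
  have zf: "filter (\<lambda>x. x \<in> B) z = filter (\<lambda>x. x \<in> B) y" if "B \<subseteq> {0,2,3}" for B
    unfolding z_def by (rule filter_filter_sub) (use that in auto)
  have h02: "filter (\<lambda>x. x \<in> {0,2}) z = [0,2,0,2]" using zf[of "{0,2}"] filter_sub_eq2[OF f1, of "{0,2}"] by simp
  have h03: "filter (\<lambda>x. x \<in> {0,3}) z = [0,3,0,3]" using zf[of "{0,3}"] filter_sub_eq2[OF f2, of "{0,3}"] by simp
  have e1: "z \<noteq> [0,2,3,0,2,3]"
  proof
    assume "z = [0,2,3,0,2,3]"
    then have "satisfies S [2,3,3,2] [2,3,2,3]" using sat_filter[OF sz0, of "{2,3}"] by simp
    from sat_map[OF this, of "\<lambda>x. x - 2"] have "satisfies S [0,1,1,0] [0,1,0,1]" by simp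
    then show False using ii sat_sym by blast
  qed
  have e2: "z \<noteq> [0,3,2,0,3,2]"
  proof
    assume "z = [0,3,2,0,3,2]"
    then have "satisfies S [0,3,2,0,2,3] [0,3,2,0,3,2]" using sat_trans[OF sat_sym[OF i2] sz0] by simp
    then have "satisfies S [3,2,2,3] [3,2,3,2]" using sat_filter[of S _ _ "{2,3}"] by fastforce
    from sat_map[OF this, of "\<lambda>x. 3 - x"] have "satisfies S [0,1,1,0] [0,1,0,1]" by simp
    then show False using ii sat_sym by blast
  qed
  have szs: "set z \<subseteq> set [0,2,3,0,3,2::nat]" using sy unfolding z_def by auto
  have mem: "z \<in> set (permsn (length [0,2,3,0,3,2::nat]) [0,2,3,0,3,2])"
    by (rule enum0[OF szs, of "[{0,2},{0,3}]"]) (use h02 h03 in auto)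
  have filt: "filter (\<lambda>y::nat list. filter (\<lambda>z. z \<in> {0,2}) y = [0,2,0,2] \<and>
     filter (\<lambda>z. z \<in> {0,3}) y = [0,3,0,3] \<and> y \<noteq> [0,2,3,0,2,3] \<and> y \<noteq> [0,3,2,0,3,2])
     (permsn (length [0,2,3,0,3,2::nat]) [0,2,3,0,3,2]) = [[0,3,2,0,2,3],[0,2,3,0,3,2]]" by code_simp
  have "z \<in> set [[0,3,2,0,2,3],[0,2,3,0,3,2]]"
    by (rule enum_filter_set[OF mem _ filt]) (use h02 h03 e1 e2 in simp)
  then have "z = [0,2,3,0,3,2] \<or> z = [0,3,2,0,2,3]" by auto
  moreover have "filter (\<lambda>x. x \<in> {2,3}) y = filter (\<lambda>x. x \<in> {2,3}) z" using zf[of "{2,3}"] by simp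
  ultimately show ?thesis by auto
qed

lemma sat_rename_back:
  assumes s: "satisfies S (map (nth ys) r) y" and d: "distinct ys" and sr: "set r \<subseteq> {..<length ys}"
  shows "\<exists>y'. y = map (nth ys) y' \<and> satisfies S r y'"
proof -
  let ?g = "inv_into {..<length ys} (nth ys)"
  have inj: "inj_on (nth ys) {..<length ys}" using d by (simp add: inj_on_nth)
  have "set y \<subseteq> set (map (nth ys) r)" using content[OF s] .
  also have "\<dots> \<subseteq> set ys" using sr by (auto intro!: nth_mem)
  finally have sy: "set y \<subseteq> set ys" .
  have e1: "map ?g (map (nth ys) r) = r"
    using sr by (induction r) (auto simp: inv_into_f_f[OF inj])
  from sat_map[OF s, of ?g] have s2: "satisfies S r (map ?g y)" unfolding e1 .
  have "\<forall>x\<in>set y. ys ! (?g x) = x"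
  proof
    fix x assume "x \<in> set y"
    then have "x \<in> set ys" using sy by auto
    then have "x \<in> nth ys ` {..<length ys}" by (auto simp: in_set_conv_nth)
    then show "ys ! (?g x) = x" by (rule f_inv_into_f)
  qed
  then have "map (nth ys) (map ?g y) = y" by (induction y) auto
  then show ?thesis using s2 by metis
qed

lemma rigid_distinct: "distinct x \<Longrightarrow> rigid S x"
proof -
  assume d: "distinct x"
  show "rigid S x"
  proof (cases "\<exists>a\<in>set x. \<exists>b\<in>set x. a \<noteq> b")
    case False
    then show ?thesis
    proof (cases x)
      case Nil then show ?thesis using rigid_nil by simp
    next
      case (Cons a x')
      then have "x' = []" using False d by (cases x') auto
      then show ?thesis using Cons rigid_rename[OF R0, of "[a]"] by simp
    qed
  next
    case True
    show ?thesis
    proof (rule rigid_pairs[OF True])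
      fix a b assume ab: "a \<in> set x" "b \<in> set x" "a \<noteq> b"
      have "rigid S [a,b]" using rigid_rename[OF R1, of "[a,b]"] ab by simp
      moreover have "rigid S [b,a]" using rigid_rename[OF R1, of "[b,a]"] ab by simp
      ultimately have "rigid S (filter (\<lambda>z. z \<in> {a,b}) x)"
        using filter_distinct_two[OF d ab] by auto
      then show "\<exists>X. a \<in> X \<and> b \<in> X \<and> rigid S (filter (\<lambda>z. z \<in> X) x)" by blast
    qed
  qed
qed

lemma GEN1D:
  assumes d: "distinct (pre @ mid @ suf)" and dn: "\<delta> \<notin> set (pre @ mid @ suf)" and m: "mid \<noteq> []"
  shows "rigid S (pre @ \<delta> # mid @ \<delta> # suf)"
proof -
  let ?x = "pre @ \<delta> # mid @ \<delta> # suf"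
  obtain m0 mr where mid: "mid = m0 # mr" using m by (cases mid) auto
  have dp: "distinct pre" "distinct mid" "distinct suf" using d by auto
  have disj: "set pre \<inter> set mid = {}" "set pre \<inter> set suf = {}" "set mid \<inter> set suf = {}" using d by auto
  have m0: "m0 \<in> set mid" using mid by simp
  show ?thesis
  proof (rule rigid_pairs)
    show "\<exists>a\<in>set ?x. \<exists>b\<in>set ?x. a \<noteq> b" using m0 dn by auto
  next
    fix a b assume a: "a \<in> set ?x" and b: "b \<in> set ?x" and ab: "a \<noteq> b"
    have main: "\<exists>X. \<delta> \<in> X \<and> t \<in> X \<and> rigid S (filter (\<lambda>z. z \<in> X) ?x)"
      if t: "t \<in> set (pre @ mid @ suf)" for t
    proof -
      have tn: "t \<noteq> \<delta>" using t dn by auto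
      have m0n: "m0 \<noteq> \<delta>" using m0 dn by auto
      consider (p) "t \<in> set pre" | (mm) "t \<in> set mid" | (s) "t \<in> set suf" using t by auto
      then show ?thesis
      proof cases
        case p
        have tm: "t \<noteq> m0" using p m0 disj by auto
        have "filter (\<lambda>z. z \<in> {\<delta>,t,m0}) pre = [t]"
          by (rule filter_distinct_one[OF dp(1)]) (use p m0 disj dn in auto)
        moreover have "filter (\<lambda>z. z \<in> {\<delta>,t,m0}) mid = [m0]"
          by (rule filter_distinct_one[OF dp(2)]) (use p m0 disj dn in auto)
        moreover have "filter (\<lambda>z. z \<in> {\<delta>,t,m0}) suf = []"
          by (rule filter_distinct_none) (use p m0 disj dn in auto)
        ultimately have "filter (\<lambda>z. z \<in> {\<delta>,t,m0}) ?x = [t,\<delta>,m0,\<delta>]" by simp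
        moreover have "rigid S [t,\<delta>,m0,\<delta>]" using rigid_rename[OF R5b, of "[t,\<delta>,m0]"] tn m0n tm by simp
        ultimately show ?thesis by (intro exI[of _ "{\<delta>,t,m0}"]) auto
      next
        case mm
        have "filter (\<lambda>z. z \<in> {\<delta>,t}) pre = []"
          by (rule filter_distinct_none) (use mm disj dn in auto)
        moreover have "filter (\<lambda>z. z \<in> {\<delta>,t}) mid = [t]"
          by (rule filter_distinct_one[OF dp(2)]) (use mm disj dn in auto)
        moreover have "filter (\<lambda>z. z \<in> {\<delta>,t}) suf = []"
          by (rule filter_distinct_none) (use mm disj dn in auto)
        ultimately have "filter (\<lambda>z. z \<in> {\<delta>,t}) ?x = [\<delta>,t,\<delta>]" by simp
        moreover have "rigid S [\<delta>,t,\<delta>]" using rigid_rename[OF R2, of "[\<delta>,t]"] tn by simp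
        ultimately show ?thesis by (intro exI[of _ "{\<delta>,t}"]) auto
      next
        case s
        have tm: "t \<noteq> m0" using s m0 disj by auto
        have "filter (\<lambda>z. z \<in> {\<delta>,t,m0}) pre = []"
          by (rule filter_distinct_none) (use s m0 disj dn in auto)
        moreover have "filter (\<lambda>z. z \<in> {\<delta>,t,m0}) mid = [m0]"
          by (rule filter_distinct_one[OF dp(2)]) (use s m0 disj dn in auto)
        moreover have "filter (\<lambda>z. z \<in> {\<delta>,t,m0}) suf = [t]"
          by (rule filter_distinct_one[OF dp(3)]) (use s m0 disj dn in auto)
        ultimately have "filter (\<lambda>z. z \<in> {\<delta>,t,m0}) ?x = [\<delta>,m0,\<delta>,t]" by simp
        moreover have "rigid S [\<delta>,m0,\<delta>,t]" using rigid_rename[OF R5, of "[\<delta>,m0,t]"] tn m0n tm by simp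
        ultimately show ?thesis by (intro exI[of _ "{\<delta>,t,m0}"]) auto
      qed
    qed
    show "\<exists>X. a \<in> X \<and> b \<in> X \<and> rigid S (filter (\<lambda>z. z \<in> X) ?x)"
    proof (cases "a = \<delta> \<or> b = \<delta>")
      case True
      then show ?thesis
      proof
        assume "a = \<delta>"
        then have "b \<in> set (pre @ mid @ suf)" using b ab by auto
        then show ?thesis using main \<open>a = \<delta>\<close> by blast
      next
        assume "b = \<delta>"
        then have "a \<in> set (pre @ mid @ suf)" using a ab by auto
        then show ?thesis using main \<open>b = \<delta>\<close> by blast
      qed
    next
      case False
      then have a': "a \<in> set (pre @ mid @ suf)" and b': "b \<in> set (pre @ mid @ suf)" using a b by auto
      have "filter (\<lambda>z. z \<in> {a,b}) ?x = filter (\<lambda>z. z \<in> {a,b}) (pre @ mid @ suf)" using False by simp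
      moreover have "rigid S [a,b]" using rigid_rename[OF R1, of "[a,b]"] ab by simp
      moreover have "rigid S [b,a]" using rigid_rename[OF R1, of "[b,a]"] ab by simp
      ultimately have "rigid S (filter (\<lambda>z. z \<in> {a,b}) ?x)"
        using filter_distinct_two[OF d a' b' ab] by auto
      then show ?thesis by blast
    qed
  qed
qed

end

declare filter_filter[simp del]

definition Cset :: "nat \<Rightarrow> word set" where
  "Cset n = {w. \<exists>P. w = 0 # P @ 0 # rev P \<and> distinct P \<and> set P = {2..<n+2} \<and> hd P = 2}"

definition goodpairs :: "nat \<Rightarrow> word \<Rightarrow> bool" where
  "goodpairs n w \<longleftrightarrow> set w \<subseteq> insert 0 {2..<n+2} \<and>
    (\<forall>c\<in>{2..<n+2}. filter (\<lambda>z. z \<in> {0,c}) w = [0,c,0,c]) \<and>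
    (\<forall>c\<in>{2..<n+2}. \<forall>d\<in>{2..<n+2}. c \<noteq> d \<longrightarrow>
        filter (\<lambda>z. z \<in> {c,d}) w = [c,d,d,c] \<or> filter (\<lambda>z. z \<in> {c,d}) w = [d,c,c,d]) \<and>
    (\<forall>c\<in>{2..<n+2}. c \<noteq> 2 \<longrightarrow> filter (\<lambda>z. z \<in> {2,c}) w = [2,c,c,2])"

lemma distinct_from_filter: "(\<And>c. c \<in> set P \<Longrightarrow> filter (\<lambda>z. z = c) P = [c]) \<Longrightarrow> distinct P"
proof (induction P)
  case Nil then show ?case by simp
next
  case (Cons a P)
  have "filter (\<lambda>z. z = a) (a # P) = [a]" using Cons.prems[of a] by simp
  then have an: "a \<notin> set P" by (auto simp: filter_empty_conv)
  have "distinct P"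
  proof (rule Cons.IH)
    fix c assume c: "c \<in> set P"
    then have "c \<noteq> a" using an by auto
    then show "filter (\<lambda>z. z = c) P = [c]" using Cons.prems[of c] c by simp
  qed
  then show ?case using an by simp
qed

lemma mem_of_filter1: "filter (\<lambda>z. z = c) xs = [c] \<Longrightarrow> c \<in> set xs"
  by (induction xs) (auto split: if_splits)

lemma split_zero: "xs @ (0::nat) # ys = [c,0,c] \<Longrightarrow> 0 \<notin> set xs \<Longrightarrow> c \<noteq> 0 \<Longrightarrow> xs = [c] \<and> ys = [c]"
  by (cases xs; cases "tl xs") (auto simp: Cons_eq_append_conv)

lemma goodpairs_Cset:
  assumes n: "n \<ge> 1" and g: "goodpairs n w"
  shows "w \<in> Cset n"
proof -
  let ?Y = "{2..<n+2::nat}"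
  have sw: "set w \<subseteq> insert 0 ?Y" and g0: "\<And>c. c \<in> ?Y \<Longrightarrow> filter (\<lambda>z. z \<in> {0,c}) w = [0,c,0,c]"
    and g1: "\<And>c d. c \<in> ?Y \<Longrightarrow> d \<in> ?Y \<Longrightarrow> c \<noteq> d \<Longrightarrow>
        filter (\<lambda>z. z \<in> {c,d}) w = [c,d,d,c] \<or> filter (\<lambda>z. z \<in> {c,d}) w = [d,c,c,d]"
    and g2: "\<And>c. c \<in> ?Y \<Longrightarrow> c \<noteq> 2 \<Longrightarrow> filter (\<lambda>z. z \<in> {2,c}) w = [2,c,c,2]"
    using g unfolding goodpairs_def by auto
  have two: "2 \<in> ?Y" using n by auto
  have f02: "filter (\<lambda>z. z \<in> {0,2}) w = [0,2,0,2]" using g0[OF two] .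
  obtain a r where w: "w = a # r" using f02 by (cases w) auto
  have a0: "a = 0"
  proof (rule ccontr)
    assume "a \<noteq> 0"
    then have "a \<in> ?Y" using sw w by auto
    then show False using g0[of a] w \<open>a \<noteq> 0\<close> by simp
  qed
  have "filter (\<lambda>z. z = 0) (filter (\<lambda>z. z \<in> {0,2}) w) = filter (\<lambda>z. z = 0) w"
    by (rule filter_filter_sub) auto
  then have "filter (\<lambda>z. z = 0) w = [0,0]" unfolding f02 by simp
  then have r0: "filter (\<lambda>z. z = 0) r = [0]" using w a0 by simp
  then have "0 \<in> set r" by (rule mem_of_filter1)
  from split_list_first[OF this] obtain P Q where r: "r = P @ 0 # Q" and P0: "0 \<notin> set P" by blast
  have "filter (\<lambda>z. z = 0) P = []" using P0 by (induction P) auto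
  then have "filter (\<lambda>z. z = 0) Q = []" using r0 r by simp
  then have Q0: "0 \<notin> set Q" by (induction Q) (auto split: if_splits)
  have wPQ: "w = 0 # P @ 0 # Q" using w a0 r by simp
  have fc: "filter (\<lambda>z. z \<in> {0,c}) P = [c] \<and> filter (\<lambda>z. z \<in> {0,c}) Q = [c]" if c: "c \<in> ?Y" for c
  proof -
    have "0 # filter (\<lambda>z. z \<in> {0,c}) P @ 0 # filter (\<lambda>z. z \<in> {0,c}) Q = [0,c,0,c]"
      using g0[OF c] wPQ by simp
    then have "filter (\<lambda>z. z \<in> {0,c}) P @ 0 # filter (\<lambda>z. z \<in> {0,c}) Q = [c,0,c]" by simp
    moreover have "0 \<notin> set (filter (\<lambda>z. z \<in> {0,c}) P)" using P0 by simp
    moreover have "c \<noteq> 0" using c by simp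
    ultimately show ?thesis using split_zero by blast
  qed
  have fcP: "filter (\<lambda>z. z = c) P = [c]" and fcQ: "filter (\<lambda>z. z = c) Q = [c]" if c: "c \<in> ?Y" for c
  proof -
    have e: "filter (\<lambda>z. z = c) (filter (\<lambda>z. z \<in> {0,c}) t) = filter (\<lambda>z. z = c) t" for t
      by (rule filter_filter_sub) auto
    show "filter (\<lambda>z. z = c) P = [c]" using e[of P] fc[OF c] by simp
    show "filter (\<lambda>z. z = c) Q = [c]" using e[of Q] fc[OF c] by simp
  qed
  have sP: "set P \<subseteq> ?Y" using sw wPQ P0 by auto
  have sQ: "set Q \<subseteq> ?Y" using sw wPQ Q0 by auto
  have dP: "distinct P" by (rule distinct_from_filter) (use fcP sP in auto)
  have dQ: "distinct Q" by (rule distinct_from_filter) (use fcQ sQ in auto)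
  have sP': "set P = ?Y"
  proof
    show "?Y \<subseteq> set P"
    proof
      fix c assume "c \<in> ?Y"
      then have "filter (\<lambda>z. z = c) P = [c]" by (rule fcP)
      then show "c \<in> set P" by (rule mem_of_filter1)
    qed
  qed (rule sP)
  have sQ': "set Q = ?Y"
  proof
    show "?Y \<subseteq> set Q"
    proof
      fix c assume "c \<in> ?Y"
      then have "filter (\<lambda>z. z = c) Q = [c]" by (rule fcQ)
      then show "c \<in> set Q" by (rule mem_of_filter1)
    qed
  qed (rule sQ)
  have QP: "Q = rev P"
  proof (rule pair_det[where A = ?Y])
    show "set Q \<union> set (rev P) \<subseteq> ?Y" using sP' sQ' by auto
    fix a b assume a: "a \<in> ?Y" and b: "b \<in> ?Y"
    show "filter (\<lambda>z. z = a \<or> z = b) Q = filter (\<lambda>z. z = a \<or> z = b) (rev P)"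
    proof (cases "a = b")
      case True
      then show ?thesis using fcP[OF a] fcQ[OF a] by (simp add: rev_filter[symmetric])
    next
      case False
      have fw: "filter (\<lambda>z. z \<in> {a,b}) w = filter (\<lambda>z. z \<in> {a,b}) P @ filter (\<lambda>z. z \<in> {a,b}) Q"
        using wPQ a b by simp
      have pP: "filter (\<lambda>z. z \<in> {a,b}) P = [a,b] \<or> filter (\<lambda>z. z \<in> {a,b}) P = [b,a]"
        by (rule filter_distinct_two[OF dP]) (use a b False sP' in auto)
      have pQ: "filter (\<lambda>z. z \<in> {a,b}) Q = [a,b] \<or> filter (\<lambda>z. z \<in> {a,b}) Q = [b,a]"
        by (rule filter_distinct_two[OF dQ]) (use a b False sQ' in auto)
      have "filter (\<lambda>z. z \<in> {a,b}) Q = rev (filter (\<lambda>z. z \<in> {a,b}) P)"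
        using g1[OF a b False] fw pP pQ False by auto
      then show ?thesis by (simp add: rev_filter)
    qed
  qed
  have hP: "hd P = 2"
  proof (rule ccontr)
    assume h: "hd P \<noteq> 2"
    have "P \<noteq> []" using sP' two by auto
    then obtain p0 P' where P: "P = p0 # P'" by (cases P) auto
    have p0: "p0 \<in> ?Y" "p0 \<noteq> 2" using sP' P h by auto
    have "filter (\<lambda>z. z \<in> {2,p0}) w = p0 # filter (\<lambda>z. z \<in> {2,p0}) (P' @ 0 # Q)"
      using wPQ P p0 by simp
    then show False using g2[OF p0] p0(2) by simp
  qed
  show ?thesis unfolding Cset_def using wPQ QP dP sP' hP by blast
qed

lemma Cset_goodpairs:
  assumes "w \<in> Cset n"
  shows "goodpairs n w"
proof -
  obtain P where w: "w = 0 # P @ 0 # rev P" and d: "distinct P" and sP: "set P = {2..<n+2}"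
    and h: "hd P = 2" using assms unfolding Cset_def by blast
  let ?Y = "{2..<n+2::nat}"
  have "set w \<subseteq> insert 0 ?Y" using w sP by auto
  moreover have "\<forall>c\<in>?Y. filter (\<lambda>z. z \<in> {0,c}) w = [0,c,0,c]"
  proof
    fix c assume c: "c \<in> ?Y"
    have "filter (\<lambda>z. z \<in> {0,c}) P = [c]"
      by (rule filter_distinct_one[OF d]) (use c sP in auto)
    then show "filter (\<lambda>z. z \<in> {0,c}) w = [0,c,0,c]" using w by (simp add: rev_filter[symmetric])
  qed
  moreover have "\<forall>c\<in>?Y. \<forall>d\<in>?Y. c \<noteq> d \<longrightarrow>
        filter (\<lambda>z. z \<in> {c,d}) w = [c,d,d,c] \<or> filter (\<lambda>z. z \<in> {c,d}) w = [d,c,c,d]"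
  proof (intro ballI impI)
    fix c e assume c: "c \<in> ?Y" and e: "e \<in> ?Y" and ce: "c \<noteq> e"
    have "filter (\<lambda>z. z \<in> {c,e}) P = [c,e] \<or> filter (\<lambda>z. z \<in> {c,e}) P = [e,c]"
      by (rule filter_distinct_two[OF d]) (use c e sP ce in auto)
    moreover have "filter (\<lambda>z. z \<in> {c,e}) w = filter (\<lambda>z. z \<in> {c,e}) P @ rev (filter (\<lambda>z. z \<in> {c,e}) P)"
      using w c e by (simp add: rev_filter)
    ultimately show "filter (\<lambda>z. z \<in> {c,e}) w = [c,e,e,c] \<or> filter (\<lambda>z. z \<in> {c,e}) w = [e,c,c,e]" by auto
  qed
  moreover have "\<forall>c\<in>?Y. c \<noteq> 2 \<longrightarrow> filter (\<lambda>z. z \<in> {2,c}) w = [2,c,c,2]"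
  proof (intro ballI impI)
    fix c assume c: "c \<in> ?Y" "c \<noteq> 2"
    have "c \<in> set P" using c(1) unfolding sP .
    then have "P \<noteq> []" by auto
    then obtain P' where P: "P = 2 # P'" using h by (cases P) auto
    have "c \<in> set P" using c(1) unfolding sP .
    then have cP: "c \<in> set P'" using c(2) P by simp
    have dP': "distinct P'" "2 \<notin> set P'" using d P by auto
    have "{2,c} \<inter> set P' = {c}" using cP dP'(2) by blast
    then have "filter (\<lambda>z. z \<in> {2,c}) P' = [c]"
      by (rule filter_distinct_one[OF dP'(1)])
    then have "filter (\<lambda>z. z \<in> {2,c}) P = [2,c]" using P by simp
    then show "filter (\<lambda>z. z \<in> {2,c}) w = [2,c,c,2]" using w c by (simp add: rev_filter[symmetric])
  qed
  ultimately show ?thesis unfolding goodpairs_def by blast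
qed


declare filter_filter[simp del]

definition prec :: "nat list \<Rightarrow> nat \<Rightarrow> nat \<Rightarrow> bool" where
  "prec P c d \<longleftrightarrow> filter (\<lambda>z. z \<in> {c,d}) P = [c,d]"

lemma prec_mem: "prec P c d \<Longrightarrow> c \<in> set P \<and> d \<in> set P"
proof -
  assume "prec P c d"
  then have "set (filter (\<lambda>z. z \<in> {c,d}) P) = {c,d}" unfolding prec_def by simp
  then show ?thesis by auto
qed

lemma prec_neq: "distinct P \<Longrightarrow> prec P c d \<Longrightarrow> c \<noteq> d"
proof
  assume d: "distinct P" and p: "prec P c d" and e: "c = d"
  have "distinct (filter (\<lambda>z. z \<in> {c,d}) P)" using d by simp
  then show False using p e unfolding prec_def by simp
qed

lemma prec_total: "distinct P \<Longrightarrow> c \<in> set P \<Longrightarrow> d \<in> set P \<Longrightarrow> c \<noteq> d \<Longrightarrow> prec P c d \<or> prec P d c"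
  unfolding prec_def using filter_distinct_two[of P c d] by (auto simp: insert_commute)

lemma prec_asym: "distinct P \<Longrightarrow> prec P c d \<Longrightarrow> \<not> prec P d c"
proof
  assume d: "distinct P" and a: "prec P c d" and b: "prec P d c"
  have "c \<noteq> d" using prec_neq[OF d a] .
  then show False using a b unfolding prec_def by (simp add: insert_commute)
qed

lemma prec_trans:
  assumes d: "distinct P" and bc: "prec P b c" and cd: "prec P c d"
  shows "prec P b d"
proof -
  have ne: "b \<noteq> c" "c \<noteq> d" using prec_neq[OF d] bc cd by auto
  have bd: "b \<noteq> d" using bc cd prec_asym[OF d] by blast
  have mem: "b \<in> set P" "c \<in> set P" "d \<in> set P" using prec_mem bc cd by auto
  let ?y = "filter (\<lambda>z. z \<in> {b,c,d}) P"
  have dy: "distinct ?y" using d by simp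
  have sy: "set ?y = {b,c,d}" using mem by auto
  have ly: "length ?y = 3" using distinct_card[OF dy] sy ne bd by simp
  obtain y1 y2 y3 where y: "?y = [y1,y2,y3]"
    using ly by (auto simp: numeral_3_eq_3 length_Suc_conv)
  have f1: "filter (\<lambda>z. z \<in> {b,c}) ?y = [b,c]"
  proof -
    have "filter (\<lambda>z. z \<in> {b,c}) ?y = filter (\<lambda>z. z \<in> {b,c}) P" by (rule filter_filter_sub) auto
    then show ?thesis using bc unfolding prec_def by simp
  qed
  have f2: "filter (\<lambda>z. z \<in> {c,d}) ?y = [c,d]"
  proof -
    have "filter (\<lambda>z. z \<in> {c,d}) ?y = filter (\<lambda>z. z \<in> {c,d}) P" by (rule filter_filter_sub) auto
    then show ?thesis using cd unfolding prec_def by simp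
  qed
  have "?y = [b,c,d]"
    using y f1 f2 sy dy ne bd by (auto split: if_splits)
  then have "filter (\<lambda>z. z \<in> {b,d}) ?y = [b,d]" using ne bd by simp
  moreover have "filter (\<lambda>z. z \<in> {b,d}) ?y = filter (\<lambda>z. z \<in> {b,d}) P" by (rule filter_filter_sub) auto
  ultimately show ?thesis unfolding prec_def by simp
qed


lemma count_subst: "count_list (subst \<sigma> u) l = (\<Sum>z\<in>set u. count_list u z * count_list (\<sigma> z) l)"
proof -
  have "count_list (subst \<sigma> u) l = sum_list (map (\<lambda>z. count_list (\<sigma> z) l) u)"
    by (induction u) auto
  then show ?thesis by (simp add: sum_list_map_eq_sum_count)
qed

lemma count_subst_ge1: "z \<in> set u \<Longrightarrow> count_list (subst \<sigma> u) l \<ge> count_list u z * count_list (\<sigma> z) l"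
  unfolding count_subst by (rule member_le_sum) auto

lemma count_subst_ge2: "z \<in> set u \<Longrightarrow> z' \<in> set u \<Longrightarrow> z \<noteq> z' \<Longrightarrow>
  count_list (subst \<sigma> u) l \<ge> count_list u z * count_list (\<sigma> z) l + count_list u z' * count_list (\<sigma> z') l"
proof -
  assume a: "z \<in> set u" "z' \<in> set u" "z \<noteq> z'"
  have "(\<Sum>y\<in>{z,z'}. count_list u y * count_list (\<sigma> y) l) \<le> (\<Sum>y\<in>set u. count_list u y * count_list (\<sigma> y) l)"
    by (rule sum_mono2) (use a in auto)
  then show ?thesis unfolding count_subst using a by simp
qed

lemma cnt_pos: "z \<in> set xs \<Longrightarrow> count_list xs z \<ge> 1"
  by (induction xs) auto

lemma count_distinct: "distinct P \<Longrightarrow> count_list P l = (if l \<in> set P then 1 else 0)"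
  by (induction P) auto

lemma split_first_unique: "xs @ a # ys = xs' @ a # ys' \<Longrightarrow> a \<notin> set xs \<Longrightarrow> a \<notin> set xs' \<Longrightarrow> xs = xs' \<and> ys = ys'"
proof (induction xs arbitrary: xs')
  case Nil then show ?case by (cases xs') auto
next
  case (Cons c xs) then show ?case by (cases xs') auto
qed

lemma hd_last_distinct: "distinct P \<Longrightarrow> length P \<ge> 2 \<Longrightarrow> hd P \<noteq> last P"
proof -
  assume d: "distinct P" and l: "length P \<ge> 2"
  obtain a P' where P: "P = a # P'" using l by (cases P) auto
  have "P' \<noteq> []" using l P by auto
  then have "last P = last P'" "last P' \<in> set P'" using P by auto
  then show ?thesis using d P by auto
qed

lemma lem_ab:
  assumes w: "A @ a # b # B @ a # b # C = 0 # P @ 0 # rev P"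
    and d: "distinct P" and P0: "0 \<notin> set P" and l: "length P \<ge> 2"
    and aA: "a \<notin> set A" and aB: "a \<notin> set B" and aC: "a \<notin> set C" and ab: "a \<noteq> b"
  shows False
proof (cases "a = 0")
  case True
  have "A = []"
  proof (rule ccontr)
    assume "A \<noteq> []"
    then obtain a1 A' where "A = a1 # A'" by (cases A) auto
    then show False using w aA True by simp
  qed
  then have e: "(b # B) @ 0 # (b # C) = P @ 0 # rev P" using w True by simp
  have "b \<noteq> 0"
  proof
    assume "b = 0"
    have "P \<noteq> []" using l by auto
    then have "hd (P @ 0 # rev P) = hd P" by simp
    moreover from arg_cong[OF e, of hd] have "b = hd (P @ 0 # rev P)" by simp
    ultimately have "hd P = 0" using \<open>b = 0\<close> by simp
    then show False using P0 \<open>P \<noteq> []\<close> by (metis list.set_sel(1))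
  qed
  moreover have "0 \<notin> set B" using aB True by simp
  ultimately have "0 \<notin> set (b # B)" by simp
  with e
  have "b # B = P" "b # C = rev P" using split_first_unique[of "b # B" 0 "b # C" P "rev P"] P0 e \<open>0 \<notin> set (b # B)\<close> by auto
  then have "hd P = b" "last P = b" by (metis list.sel(1), metis hd_rev list.sel(1))
  then show False using hd_last_distinct[OF d l] by simp
next
  case False
  have "a \<in> set (0 # P @ 0 # rev P)" using w[symmetric] by simp
  then have aP: "a \<in> set P" using False by auto
  obtain P1 P2 where P: "P = P1 @ a # P2" using split_list[OF aP] by blast
  have a1: "a \<notin> set P1" "a \<notin> set P2" using d P by auto
  have "(0 # P1) @ a # (P2 @ 0 # rev P2 @ a # rev P1) = A @ a # (b # B @ a # b # C)"
    using w P by simp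
  then have e1: "0 # P1 = A" "P2 @ 0 # rev P2 @ a # rev P1 = b # B @ a # b # C"
    using split_first_unique[of "0 # P1" a _ A] a1 aA False by auto
  have "(P2 @ 0 # rev P2) @ a # rev P1 = (b # B) @ a # (b # C)" using e1(2) by simp
  then have e2: "P2 @ 0 # rev P2 = b # B" "rev P1 = b # C"
    using split_first_unique[of "P2 @ 0 # rev P2" a "rev P1" "b # B"] a1 aB ab False by auto
  have bP1: "b \<in> set P1" using e2(2) by (metis list.set_intros(1) set_rev)
  show False
  proof (cases P2)
    case Nil
    then have "b = 0" using e2(1) by simp
    then show False using bP1 P0 P by auto
  next
    case (Cons p2 P2')
    then have "b = p2" using e2(1) by simp
    then show False using bP1 d P Cons by auto
  qed
qed

locale key = hyps S for S :: "'a::monoid_mult itself" +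
  fixes P p q u v :: word and \<sigma> :: "nat \<Rightarrow> word"
  assumes s: "satisfies S u v"
    and dP: "distinct P" and P0: "0 \<notin> set P" and lP: "length P \<ge> 2"
    and wdef: "p @ subst \<sigma> u @ q = 0 # P @ 0 # rev P"
    and ne: "\<And>z. z \<in> set u \<Longrightarrow> \<sigma> z \<noteq> []"
    and few: "card (set u) \<le> length P"
begin

abbreviation "w \<equiv> 0 # P @ 0 # rev P"
abbreviation "W \<equiv> subst \<sigma> u"

lemma cw: "count_list w l = (if l = 0 \<or> l \<in> set P then 2 else 0)"
proof -
  have "count_list P l = (if l \<in> set P then 1 else 0)" using dP by (rule count_distinct)
  then show ?thesis using P0 by auto
qed

lemma cW: "count_list W l \<le> 2"
proof -
  have "count_list w l = count_list p l + count_list W l + count_list q l" using wdef[symmetric] by simp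
  then show ?thesis using cw[of l] by (simp split: if_splits)
qed

lemma cnt_le2: "z \<in> set u \<Longrightarrow> count_list u z \<le> 2"
proof -
  assume z: "z \<in> set u"
  obtain l r where "\<sigma> z = l # r" using ne[OF z] by (cases "\<sigma> z") auto
  then have "count_list (\<sigma> z) l \<ge> 1" by simp
  then have "count_list W l \<ge> count_list u z * 1" using count_subst_ge1[OF z, of \<sigma> l]
    by (meson dual_order.trans mult_le_mono2)
  then show ?thesis using cW[of l] by simp
qed

lemma dvar_single:
  assumes z: "z \<in> set u" and c2: "count_list u z \<ge> 2"
  shows "count_list u z = 2 \<and> (\<exists>c. \<sigma> z = [c])"
proof -
  have cz: "count_list u z = 2" using cnt_le2[OF z] c2 by simp
  obtain a r where sz: "\<sigma> z = a # r" using ne[OF z] by (cases "\<sigma> z") auto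
  have "r = []"
  proof (rule ccontr)
    assume "r \<noteq> []"
    then obtain b r' where r: "r = b # r'" by (cases r) auto
    have ba: "b \<noteq> a"
    proof
      assume "b = a"
      then have "count_list (\<sigma> z) a \<ge> 2" using sz r by simp
      then have "count_list W a \<ge> 2 * 2" using count_subst_ge1[OF z, of \<sigma> a] cz
        by (metis le_trans mult_le_mono2)
      then show False using cW[of a] by simp
    qed
    obtain u1 u2 where u: "u = u1 @ z # u2" and z1: "z \<notin> set u1"
      using split_list_first[OF z] by blast
    have "count_list u2 z = 1" using cz u z1 by simp
    then have z2: "z \<in> set u2" by (metis count_notin zero_neq_one)
    obtain u3 u4 where u2: "u2 = u3 @ z # u4" using split_list[OF z2] by blast
    have weq: "(p @ subst \<sigma> u1) @ a # b # (r' @ subst \<sigma> u3) @ a # b # (r' @ subst \<sigma> u4 @ q) = w"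
      using wdef u u2 sz r by simp
    have "w = (p @ subst \<sigma> u1) @ a # b # (r' @ subst \<sigma> u3) @ a # b # (r' @ subst \<sigma> u4 @ q)"
      using weq by simp
    moreover have "count_list w a = count_list (p @ subst \<sigma> u1) a + count_list (r' @ subst \<sigma> u3) a
        + count_list (r' @ subst \<sigma> u4 @ q) a + 2"
      using calculation ba by simp
    moreover have "count_list w a \<le> 2" using cw[of a] by simp
    ultimately have "a \<notin> set (p @ subst \<sigma> u1)" "a \<notin> set (r' @ subst \<sigma> u3)" "a \<notin> set (r' @ subst \<sigma> u4 @ q)"
      by (simp_all add: count_list_0_iff[symmetric])
    then show False using lem_ab[OF weq dP P0 lP _ _ _ ba[symmetric]] by blast
  qed
  then show ?thesis using cz sz by auto
qed

definition Dl :: "nat \<Rightarrow> bool" where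
  "Dl l \<longleftrightarrow> (\<exists>z\<in>set u. count_list u z = 2 \<and> \<sigma> z = [l])"

definition Dv :: "nat \<Rightarrow> nat" where
  "Dv l = (SOME z. z \<in> set u \<and> count_list u z = 2 \<and> \<sigma> z = [l])"

lemma Dv: "Dl l \<Longrightarrow> Dv l \<in> set u \<and> count_list u (Dv l) = 2 \<and> \<sigma> (Dv l) = [l]"
  unfolding Dl_def Dv_def by (rule someI_ex) blast

lemma Dv_unique: "Dl l \<Longrightarrow> z \<in> set u \<Longrightarrow> l \<in> set (\<sigma> z) \<Longrightarrow> z = Dv l"
proof (rule ccontr)
  assume D: "Dl l" and z: "z \<in> set u" and l: "l \<in> set (\<sigma> z)" and ne': "z \<noteq> Dv l"
  have dv: "Dv l \<in> set u" "count_list u (Dv l) = 2" "\<sigma> (Dv l) = [l]" using Dv[OF D] by auto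
  have f1: "count_list W l \<ge> count_list u (Dv l) * count_list (\<sigma> (Dv l)) l + count_list u z * count_list (\<sigma> z) l"
    using count_subst_ge2[OF dv(1) z] ne' by auto
  have m: "count_list u z * count_list (\<sigma> z) l \<ge> 1"
    using mult_le_mono[OF cnt_pos[OF z] cnt_pos[OF l]] by simp
  have t1: "count_list u (Dv l) * count_list (\<sigma> (Dv l)) l = 2" using dv by simp
  have "count_list W l \<ge> 2 + 1" using f1 m t1 by linarith
  then show False using cW[of l] by simp
qed

lemma cnt_cases: "z \<in> set u \<Longrightarrow> count_list u z = 1 \<or> (count_list u z = 2 \<and> Dl (hd (\<sigma> z)) \<and> z = Dv (hd (\<sigma> z)))"
proof -
  assume z: "z \<in> set u"
  have ge: "count_list u z \<ge> 1" using z by (rule cnt_pos)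
  show ?thesis
  proof (cases "count_list u z \<ge> 2")
    case True
    obtain c where c: "\<sigma> z = [c]" and cz: "count_list u z = 2" using dvar_single[OF z True] by blast
    have D: "Dl c" unfolding Dl_def using z cz c by blast
    have "z = Dv c" by (rule Dv_unique[OF D z]) (simp add: c)
    then show ?thesis using cz D c by simp
  next
    case False then show ?thesis using ge by simp
  qed
qed

lemma Dl_W: "Dl l \<Longrightarrow> count_list W l = 2"
proof -
  assume D: "Dl l"
  have dv: "Dv l \<in> set u" "count_list u (Dv l) = 2" "\<sigma> (Dv l) = [l]" using Dv[OF D] by auto
  have "count_list W l \<ge> 2 * 1" using count_subst_ge1[OF dv(1), of \<sigma> l] dv by simp
  then show ?thesis using cW[of l] by simp
qed

lemma Dl_pq: "Dl l \<Longrightarrow> l \<notin> set p \<and> l \<notin> set q \<and> (l = 0 \<or> l \<in> set P)"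
proof -
  assume D: "Dl l"
  have "count_list w l = count_list p l + count_list W l + count_list q l" using wdef[symmetric] by simp
  then have "count_list w l = count_list p l + 2 + count_list q l" using Dl_W[OF D] by simp
  then show ?thesis using cw[of l] by (auto simp: count_list_0_iff[symmetric] split: if_splits)
qed

lemma Dv_inj: "Dl l \<Longrightarrow> Dl l' \<Longrightarrow> Dv l = Dv l' \<Longrightarrow> l = l'"
proof -
  assume a: "Dl l" "Dl l'" "Dv l = Dv l'"
  have e1: "\<sigma> (Dv l) = [l]" using Dv[OF a(1)] by blast
  have e2: "\<sigma> (Dv l') = [l']" using Dv[OF a(2)] by blast
  have "[l] = [l']" unfolding e1[symmetric] e2[symmetric] a(3) ..
  then show "l = l'" by simp
qed

end

fun adjfree :: "'a list \<Rightarrow> bool" where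
  "adjfree (a # b # r) = (a \<noteq> b \<and> adjfree (b # r))"
| "adjfree _ = True"

lemma adjfree_app: "adjfree (A @ B) \<Longrightarrow> adjfree B"
  by (induction A rule: adjfree.induct) (auto, metis adjfree.elims(3) adjfree.simps(1) append_Cons)

lemma adjfree_app1: "adjfree (A @ B) \<Longrightarrow> adjfree A"
  by (induction A rule: adjfree.induct) auto

lemma adjfree_no: "adjfree T \<Longrightarrow> T = A @ l # l # B \<Longrightarrow> False"
proof -
  assume a: "adjfree T" and t: "T = A @ l # l # B"
  have "adjfree (l # l # B)" using adjfree_app a t by blast
  then show False by simp
qed

lemma adjfree_mid: "adjfree (ps @ m @ qs) \<Longrightarrow> adjfree m"
  using adjfree_app adjfree_app1 by blast

lemma pre0: "ps @ r = l # T \<Longrightarrow> l \<notin> set ps \<Longrightarrow> ps = []"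
  by (cases ps) auto

lemma pre1: "ps @ r = a # l # T \<Longrightarrow> l \<notin> set ps \<Longrightarrow> ps = [] \<or> ps = [a]"
  by (cases ps; cases "tl ps") auto

lemma suf0: "r @ qs = T @ [l] \<Longrightarrow> l \<notin> set qs \<Longrightarrow> qs = []"
proof -
  assume a: "r @ qs = T @ [l]" "l \<notin> set qs"
  have "rev qs @ rev r = l # rev T" using arg_cong[OF a(1), of rev] by simp
  then have "rev qs = []" using pre0 a(2) by (metis set_rev)
  then show ?thesis by simp
qed

lemma suf1: "r @ qs = T @ [l, a] \<Longrightarrow> l \<notin> set qs \<Longrightarrow> qs = [] \<or> qs = [a]"
proof -
  assume a: "r @ qs = T @ [l, a]" "l \<notin> set qs"
  have "rev qs @ rev r = a # l # rev T" using arg_cong[OF a(1), of rev] by simp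
  then have "rev qs = [] \<or> rev qs = [a]" using pre1 a(2) by (metis set_rev)
  then show ?thesis by auto
qed

lemma distinct_count1: "(\<And>z. z \<in> set x \<Longrightarrow> count_list x z \<le> 1) \<Longrightarrow> distinct x"
proof (induction x)
  case (Cons a x)
  have "count_list (a # x) a \<le> 1" using Cons.prems[of a] by simp
  then have "a \<notin> set x" by (simp add: count_list_0_iff)
  moreover have "distinct x"
  proof (rule Cons.IH)
    fix z assume "z \<in> set x"
    then show "count_list x z \<le> 1" using Cons.prems[of z] by (simp split: if_splits)
  qed
  ultimately show ?case by simp
qed simp

lemma count_filter_le: "count_list (filter P x) z \<le> count_list x z"
  by (induction x) auto

lemma count_filter_eq: "P z \<Longrightarrow> count_list (filter P x) z = count_list x z"
  by (induction x) auto

lemma filter_w: "filter (\<lambda>z. z \<in> L) (0 # P @ 0 # rev P) =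
   (if 0 \<in> L then 0 # filter (\<lambda>z. z \<in> L) P @ 0 # rev (filter (\<lambda>z. z \<in> L) P)
    else filter (\<lambda>z. z \<in> L) P @ rev (filter (\<lambda>z. z \<in> L) P))"
  by (simp add: rev_filter)

lemma filter_P3:
  assumes d: "distinct P" and bc: "prec P b c" and cd: "prec P c d"
  shows "filter (\<lambda>z. z \<in> {b,c,d}) P = [b,c,d]"
proof -
  have ne: "b \<noteq> c" "c \<noteq> d" using prec_neq[OF d] bc cd by auto
  have bd: "b \<noteq> d" using bc cd prec_asym[OF d] by blast
  have mem: "b \<in> set P" "c \<in> set P" "d \<in> set P" using prec_mem bc cd by auto
  let ?y = "filter (\<lambda>z. z \<in> {b,c,d}) P"
  have dy: "distinct ?y" using d by simp
  have sy: "set ?y = {b,c,d}" using mem by auto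
  have ly: "length ?y = 3" using distinct_card[OF dy] sy ne bd by simp
  obtain y1 y2 y3 where y: "?y = [y1,y2,y3]"
    using ly by (auto simp: numeral_3_eq_3 length_Suc_conv)
  have f1: "filter (\<lambda>z. z \<in> {b,c}) ?y = [b,c]"
  proof -
    have "filter (\<lambda>z. z \<in> {b,c}) ?y = filter (\<lambda>z. z \<in> {b,c}) P" by (rule filter_filter_sub) auto
    then show ?thesis using bc unfolding prec_def by simp
  qed
  have f2: "filter (\<lambda>z. z \<in> {c,d}) ?y = [c,d]"
  proof -
    have "filter (\<lambda>z. z \<in> {c,d}) ?y = filter (\<lambda>z. z \<in> {c,d}) P" by (rule filter_filter_sub) auto
    then show ?thesis using cd unfolding prec_def by simp
  qed
  show "?y = [b,c,d]"
    using y f1 f2 sy dy ne bd by (auto split: if_splits)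
qed

context key begin

definition tau :: "nat set \<Rightarrow> nat \<Rightarrow> word" where
  "tau L z = filter (\<lambda>y. y \<in> L) (\<sigma> z)"

definition xL :: "nat set \<Rightarrow> word" where
  "xL L = filter (\<lambda>z. z \<in> {z. tau L z \<noteq> []}) u"

lemma WL: "subst (tau L) (xL L) = filter (\<lambda>y. y \<in> L) W"
proof -
  have "subst (tau L) (xL L) = subst (tau L) u" unfolding xL_def
    by (rule subst_filter_sub) auto
  also have "\<dots> = filter (\<lambda>y. y \<in> L) W" by (simp add: filter_subst tau_def[abs_def])
  finally show ?thesis .
qed

lemma wL: "filter (\<lambda>y. y \<in> L) p @ subst (tau L) (xL L) @ filter (\<lambda>y. y \<in> L) q = filter (\<lambda>y. y \<in> L) w"
proof -
  have "filter (\<lambda>y. y \<in> L) w = filter (\<lambda>y. y \<in> L) (p @ W @ q)" using wdef by simp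
  then show ?thesis using WL by simp
qed

lemma xL_set: "z \<in> set (xL L) \<Longrightarrow> z \<in> set u \<and> tau L z \<noteq> []"
  unfolding xL_def by auto

lemma xL_count: "z \<in> set (xL L) \<Longrightarrow> count_list (xL L) z = count_list u z"
  unfolding xL_def by (rule count_filter_eq) (auto)

lemma key_rigid:
  assumes r: "rigid S (filter (\<lambda>z. z \<in> X) u)"
    and sub: "\<And>z. z \<in> set u \<Longrightarrow> tau {a,b} z \<noteq> [] \<Longrightarrow> z \<in> X"
  shows "filter (\<lambda>y. y \<in> {a,b}) (p @ subst \<sigma> v @ q) = filter (\<lambda>y. y \<in> {a,b}) w"
proof -
  have fX: "filter (\<lambda>z. z \<in> X) v = filter (\<lambda>z. z \<in> X) u" by (rule rfeq[OF s r])
  have sv: "set v \<subseteq> set u" using content[OF s] .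
  have "subst (tau {a,b}) v = subst (tau {a,b}) (filter (\<lambda>z. z \<in> X) v)"
    by (rule subst_filter_sub[symmetric]) (use sv sub in auto)
  also have "\<dots> = subst (tau {a,b}) (filter (\<lambda>z. z \<in> X) u)" using fX by simp
  also have "\<dots> = subst (tau {a,b}) u" by (rule subst_filter_sub) (use sub in auto)
  finally have e: "subst (tau {a,b}) v = subst (tau {a,b}) u" .
  have "filter (\<lambda>y. y \<in> {a,b}) (p @ subst \<sigma> v @ q) =
        filter (\<lambda>y. y \<in> {a,b}) p @ subst (tau {a,b}) v @ filter (\<lambda>y. y \<in> {a,b}) q"
    by (simp add: filter_subst tau_def[abs_def])
  also have "\<dots> = filter (\<lambda>y. y \<in> {a,b}) p @ subst (tau {a,b}) u @ filter (\<lambda>y. y \<in> {a,b}) q"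
    using e by simp
  also have "\<dots> = filter (\<lambda>y. y \<in> {a,b}) (p @ W @ q)" by (simp add: filter_subst tau_def[abs_def])
  also have "\<dots> = filter (\<lambda>y. y \<in> {a,b}) w" using wdef by simp
  finally show ?thesis .
qed

lemma key_rigid_xL:
  assumes r: "rigid S (xL L)" and ab: "a \<in> L" "b \<in> L"
  shows "filter (\<lambda>y. y \<in> {a,b}) (p @ subst \<sigma> v @ q) = filter (\<lambda>y. y \<in> {a,b}) w"
proof (rule key_rigid[where X = "{z. tau L z \<noteq> []}"])
  show "rigid S (filter (\<lambda>z. z \<in> {z. tau L z \<noteq> []}) u)" using r unfolding xL_def .
  fix z assume "z \<in> set u" "tau {a,b} z \<noteq> []"
  then obtain y where "y \<in> set (\<sigma> z)" "y \<in> {a,b}" unfolding tau_def by (auto simp: filter_empty_conv)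
  then have "y \<in> set (tau L z)" using ab unfolding tau_def by auto
  then show "z \<in> {z. tau L z \<noteq> []}" by auto
qed

lemma lin_var0:
  assumes z: "z \<in> set (xL L)"
  shows "count_list u z = 1 \<or> (z = Dv (hd (\<sigma> z)) \<and> Dl (hd (\<sigma> z)) \<and> hd (\<sigma> z) \<in> L)"
proof -
  have zu: "z \<in> set u" and t: "tau L z \<noteq> []" using xL_set[OF z] by auto
  from cnt_cases[OF zu] show ?thesis
  proof
    assume c: "count_list u z = 2 \<and> Dl (hd (\<sigma> z)) \<and> z = Dv (hd (\<sigma> z))"
    have "\<sigma> z = [hd (\<sigma> z)]" using Dv[of "hd (\<sigma> z)"] c by simp
    then have "hd (\<sigma> z) \<in> L" using t unfolding tau_def by (metis filter.simps(1) filter.simps(2))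
    then show ?thesis using c by simp
  qed simp
qed

lemma lin_var:
  assumes z: "z \<in> set (xL L)" and nd: "\<And>l. l \<in> L \<Longrightarrow> Dl l \<Longrightarrow> l = l0"
  shows "count_list u z = 1 \<or> z = Dv l0 \<and> Dl l0"
proof -
  have zu: "z \<in> set u" and t: "tau L z \<noteq> []" using xL_set[OF z] by auto
  from cnt_cases[OF zu] show ?thesis
  proof
    assume c: "count_list u z = 2 \<and> Dl (hd (\<sigma> z)) \<and> z = Dv (hd (\<sigma> z))"
    have "\<sigma> z = [hd (\<sigma> z)]" using Dv[of "hd (\<sigma> z)"] c by simp
    then have "hd (\<sigma> z) \<in> L" using t unfolding tau_def by (metis filter.simps(1) filter.simps(2))
    then have "hd (\<sigma> z) = l0" using nd c by blast
    then show ?thesis using c by simp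
  qed simp
qed

lemma rigid_noD:
  assumes nd: "\<And>l. l \<in> L \<Longrightarrow> \<not> Dl l"
  shows "rigid S (xL L)"
proof (rule rigid_distinct, rule distinct_count1)
  fix z assume z: "z \<in> set (xL L)"
  have "count_list u z = 1" using lin_var0[OF z] nd by blast
  then show "count_list (xL L) z \<le> 1" using xL_count[OF z] by simp
qed

lemma rigid_oneD:
  assumes l0: "l0 \<in> L" "Dl l0" and nd: "\<And>l. l \<in> L \<Longrightarrow> Dl l \<Longrightarrow> l = l0"
    and af: "adjfree (filter (\<lambda>y. y \<in> L) W)"
  shows "rigid S (xL L)"
proof -
  let ?x = "xL L"
  let ?d = "Dv l0"
  have dv: "?d \<in> set u" "count_list u ?d = 2" "\<sigma> ?d = [l0]" using Dv[OF l0(2)] by auto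
  have dx: "?d \<in> set ?x" unfolding xL_def tau_def using dv l0(1) by auto
  have cd: "count_list ?x ?d = 2" using xL_count[OF dx] dv by simp
  have other: "count_list ?x z = 1" if "z \<in> set ?x" "z \<noteq> ?d" for z
    using lin_var[OF that(1) nd] that xL_count[OF that(1)] by auto
  obtain pre r1 where x1: "?x = pre @ ?d # r1" and p1: "?d \<notin> set pre" using split_list_first[OF dx] by blast
  have "count_list r1 ?d = 1" using cd x1 p1 by simp
  then have "?d \<in> set r1" by (metis count_notin zero_neq_one)
  from split_list_first[OF this] obtain mid suf where r1: "r1 = mid @ ?d # suf" and p2: "?d \<notin> set mid" by blast
  have "count_list suf ?d = 0" using cd x1 p1 r1 p2 by simp
  then have p3: "?d \<notin> set suf" by (simp add: count_list_0_iff)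
  have x: "?x = pre @ ?d # mid @ ?d # suf" using x1 r1 by simp
  have dist: "distinct (pre @ mid @ suf)"
  proof (rule distinct_count1)
    fix z assume z: "z \<in> set (pre @ mid @ suf)"
    then have "z \<noteq> ?d" using p1 p2 p3 by auto
    moreover have "z \<in> set ?x" using z x by auto
    ultimately have "count_list ?x z = 1" using other by blast
    then show "count_list (pre @ mid @ suf) z \<le> 1" using x \<open>z \<noteq> ?d\<close> by simp
  qed
  have mid: "mid \<noteq> []"
  proof
    assume "mid = []"
    then have "filter (\<lambda>y. y \<in> L) W = subst (tau L) pre @ l0 # l0 # subst (tau L) suf"
      using WL[of L, symmetric] x dv l0(1) by (simp add: tau_def)
    then show False using adjfree_no[OF af] by blast
  qed
  show ?thesis unfolding x by (rule GEN1D[OF dist _ mid]) (use p1 p2 p3 in auto)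
qed

lemma dec1:
  assumes bL: "b \<in> L" and nb: "\<not> Dl b" and dl: "\<And>l. l \<in> L \<Longrightarrow> l \<noteq> b \<Longrightarrow> Dl l"
    and af: "adjfree (filter (\<lambda>y. y \<in> L) W)"
  shows "map (\<lambda>z. hd (tau L z)) (xL L) = filter (\<lambda>y. y \<in> L) W \<and> (\<forall>z\<in>set (xL L). tau L z = [hd (tau L z)])"
proof -
  let ?x = "xL L"
  have single: "tau L z = [hd (tau L z)]" if z: "z \<in> set ?x" for z
  proof -
    have zu: "z \<in> set u" and t: "tau L z \<noteq> []" using xL_set[OF z] by auto
    from cnt_cases[OF zu] show ?thesis
    proof
      assume c: "count_list u z = 2 \<and> Dl (hd (\<sigma> z)) \<and> z = Dv (hd (\<sigma> z))"
      have "\<sigma> z = [hd (\<sigma> z)]" using Dv[of "hd (\<sigma> z)"] c by simp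
      then show ?thesis using t unfolding tau_def by (metis filter.simps(1) filter.simps(2) list.sel(1))
    next
      assume c1: "count_list u z = 1"
      have allb: "y = b" if y: "y \<in> set (tau L z)" for y
      proof (rule ccontr)
        assume "y \<noteq> b"
        have yL: "y \<in> L" and ys: "y \<in> set (\<sigma> z)" using y unfolding tau_def by auto
        have D: "Dl y" using dl[OF yL \<open>y \<noteq> b\<close>] .
        have "z = Dv y" by (rule Dv_unique[OF D zu ys])
        then show False using Dv[OF D] c1 by simp
      qed
      obtain t1 tr where tz: "tau L z = t1 # tr" using t by (cases "tau L z") auto
      have "tr = []"
      proof (rule ccontr)
        assume "tr \<noteq> []"
        then obtain t2 tr' where tr: "tr = t2 # tr'" by (cases tr) auto
        have "t1 = b" "t2 = b" using allb tz tr by auto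
        obtain x1 x2 where xx: "?x = x1 @ z # x2" using split_list[OF z] by blast
        have "filter (\<lambda>y. y \<in> L) W = subst (tau L) x1 @ b # b # (tr' @ subst (tau L) x2)"
          using WL[of L, symmetric] xx tz tr \<open>t1 = b\<close> \<open>t2 = b\<close> by simp
        then show False using adjfree_no[OF af] by blast
      qed
      then show ?thesis using tz by simp
    qed
  qed
  have "subst (tau L) ?x = subst (\<lambda>z. [hd (tau L z)]) ?x"
    by (rule subst_cong) (use single in auto)
  then have "map (\<lambda>z. hd (tau L z)) ?x = filter (\<lambda>y. y \<in> L) W" using WL subst_single by metis
  then show ?thesis using single by blast
qed

lemma xL_D: "z \<in> set (xL L) \<Longrightarrow> tau L z = [l] \<Longrightarrow> Dl l \<Longrightarrow> z = Dv l"
proof -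
  assume z: "z \<in> set (xL L)" and t: "tau L z = [l]" and D: "Dl l"
  have "l \<in> set (tau L z)" using t by simp
  then have "l \<in> set (\<sigma> z)" unfolding tau_def by simp
  then show ?thesis using Dv_unique[OF D] xL_set[OF z] by blast
qed

lemma xL_lin: "z \<in> set (xL L) \<Longrightarrow> tau L z = [b] \<Longrightarrow> \<not> Dl b \<Longrightarrow> count_list u z = 1"
proof -
  assume z: "z \<in> set (xL L)" and t: "tau L z = [b]" and nD: "\<not> Dl b"
  have zu: "z \<in> set u" using xL_set[OF z] by blast
  from cnt_cases[OF zu] show ?thesis
  proof
    assume c: "count_list u z = 2 \<and> Dl (hd (\<sigma> z)) \<and> z = Dv (hd (\<sigma> z))"
    have "\<sigma> z = [hd (\<sigma> z)]" using Dv[of "hd (\<sigma> z)"] c by simp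
    then have "hd (\<sigma> z) = b" using t unfolding tau_def by (metis filter.simps(1) filter.simps(2) list.inject list.simps(3))
    then show ?thesis using c nD by simp
  qed simp
qed

end

lemma filterP0: "0 \<notin> set P \<Longrightarrow> filter (\<lambda>z. z \<in> insert 0 B) P = filter (\<lambda>z. z \<in> B) P"
  by (induction P) auto

context key begin

abbreviation "w' \<equiv> p @ subst \<sigma> v @ q"

lemma vars_DD: "Dl a \<Longrightarrow> Dl b \<Longrightarrow> z \<in> set u \<Longrightarrow> tau {a,b} z \<noteq> [] \<Longrightarrow> z = Dv a \<or> z = Dv b"
proof -
  assume a: "Dl a" and b: "Dl b" and z: "z \<in> set u" and t: "tau {a,b} z \<noteq> []"
  then obtain y where "y \<in> set (\<sigma> z)" "y = a \<or> y = b" unfolding tau_def by (auto simp: filter_empty_conv)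
  then show ?thesis using Dv_unique[OF a z] Dv_unique[OF b z] by blast
qed

lemma key_DD: "Dl a \<Longrightarrow> Dl b \<Longrightarrow> rigid S (filter (\<lambda>z. z \<in> X) u) \<Longrightarrow> Dv a \<in> X \<Longrightarrow> Dv b \<in> X \<Longrightarrow>
  filter (\<lambda>y. y \<in> {a,b}) w' = filter (\<lambda>y. y \<in> {a,b}) w"
  by (rule key_rigid) (use vars_DD in blast)+

lemma filter_sub_xL: "(\<And>z. z \<in> X \<Longrightarrow> tau L z \<noteq> []) \<Longrightarrow> filter (\<lambda>z. z \<in> X) u = filter (\<lambda>z. z \<in> X) (xL L)"
  unfolding xL_def by (rule filter_filter_sub[symmetric]) auto

lemma dec_D: "z \<in> set (xL L) \<Longrightarrow> tau L z = [hd (tau L z)] \<Longrightarrow> hd (tau L z) = l \<Longrightarrow> Dl l \<Longrightarrow> z = Dv l"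
  using xL_D by metis

lemma dec_lin: "z \<in> set (xL L) \<Longrightarrow> tau L z = [hd (tau L z)] \<Longrightarrow> hd (tau L z) = b \<Longrightarrow> \<not> Dl b \<Longrightarrow> count_list u z = 1"
  using xL_lin by metis

lemma inP_ne0: "x \<in> set P \<Longrightarrow> x \<noteq> 0"
proof
  assume "x \<in> set P" "x = 0"
  then show False using P0 by simp
qed

lemma Dv_cnt: "Dl l \<Longrightarrow> count_list u (Dv l) = 2" using Dv by blast

lemma tau_Dv: "Dl l \<Longrightarrow> l \<in> L \<Longrightarrow> tau L (Dv l) = [l]"
  using Dv unfolding tau_def by simp

lemma caseA4a:
  assumes D0: "Dl 0" and Dc: "Dl c" and nb: "\<not> Dl b" and pbc: "prec P b c"
  shows "filter (\<lambda>y. y \<in> {0,c}) w' = filter (\<lambda>y. y \<in> {0,c}) w"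
proof -
  have mem: "b \<in> set P" "c \<in> set P" using prec_mem[OF pbc] by auto
  have ne: "b \<noteq> c" "b \<noteq> 0" "c \<noteq> 0" using prec_neq[OF dP pbc] inP_ne0[OF mem(1)] inP_ne0[OF mem(2)] by auto
  let ?L = "{0,b,c}"
  have fP: "filter (\<lambda>z. z \<in> ?L) P = [b,c]"
    using filterP0[OF P0, of "{b,c}"] pbc unfolding prec_def by simp
  have T: "filter (\<lambda>z. z \<in> ?L) w = [0,b,c,0,c,b]" unfolding filter_w[of ?L P] using fP by (simp del: rev_filter)
  have wl: "filter (\<lambda>y. y \<in> ?L) p @ filter (\<lambda>y. y \<in> ?L) W @ filter (\<lambda>y. y \<in> ?L) q = [0,b,c,0,c,b]"
    using wL[of ?L] WL[of ?L] T by simp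
  have pq: "0 \<notin> set p" "0 \<notin> set q" "c \<notin> set p" "c \<notin> set q" using Dl_pq[OF D0] Dl_pq[OF Dc] by auto
  have fp: "filter (\<lambda>y. y \<in> ?L) p = []"
    by (rule pre0[of _ _ 0]) (use wl pq in auto)
  have "filter (\<lambda>y. y \<in> ?L) q = [] \<or> filter (\<lambda>y. y \<in> ?L) q = [b]"
    by (rule suf1[of "filter (\<lambda>y. y \<in> ?L) p @ filter (\<lambda>y. y \<in> ?L) W" _ "[0,b,c,0]" c]) (use wl pq in auto)
  then have WLc: "filter (\<lambda>y. y \<in> ?L) W = [0,b,c,0,c,b] \<or> filter (\<lambda>y. y \<in> ?L) W = [0,b,c,0,c]"
    using wl fp by auto
  have afT: "adjfree [0,b,c,0,c,b]" using ne by auto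
  have af: "adjfree (filter (\<lambda>y. y \<in> ?L) W)" using adjfree_mid[of "filter (\<lambda>y. y \<in> ?L) p"] wl afT by metis
  have dl: "Dl l" if "l \<in> ?L" "l \<noteq> b" for l using that D0 Dc by auto
  have dec: "map (\<lambda>z. hd (tau ?L z)) (xL ?L) = filter (\<lambda>y. y \<in> ?L) W"
    and sg: "\<And>z. z \<in> set (xL ?L) \<Longrightarrow> tau ?L z = [hd (tau ?L z)]"
    using dec1[of b ?L, OF _ nb dl af] by auto
  let ?e = "Dv 0" and ?g = "Dv c"
  have eg: "?e \<noteq> ?g" using Dv_inj[OF D0 Dc] ne by auto
  have rr: "rigid S [?e, s, ?g, ?e, ?g]" if "count_list u s = 1" for s
  proof -
    have "s \<noteq> ?e" "s \<noteq> ?g" using that Dv_cnt[OF D0] Dv_cnt[OF Dc] by auto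
    then show ?thesis using rigid_rename[OF R4, of "[?e, s, ?g]"] eg by simp
  qed
  from WLc show ?thesis
  proof
    assume W6: "filter (\<lambda>y. y \<in> ?L) W = [0,b,c,0,c,b]"
    then obtain x0 x1 x2 x3 x4 x5 where x: "xL ?L = [x0,x1,x2,x3,x4,x5]"
      and f: "hd (tau ?L x0) = 0" "hd (tau ?L x1) = b" "hd (tau ?L x2) = c"
             "hd (tau ?L x3) = 0" "hd (tau ?L x4) = c" "hd (tau ?L x5) = b"
      using dec by (auto simp: map_eq_Cons_conv)
    have xs: "x0 \<in> set (xL ?L)" "x1 \<in> set (xL ?L)" "x2 \<in> set (xL ?L)" "x3 \<in> set (xL ?L)"
      "x4 \<in> set (xL ?L)" "x5 \<in> set (xL ?L)" using x by auto
    have ids: "x0 = ?e" "x2 = ?g" "x3 = ?e" "x4 = ?g"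
      using dec_D[OF xs(1) sg[OF xs(1)] f(1) D0] dec_D[OF xs(3) sg[OF xs(3)] f(3) Dc]
        dec_D[OF xs(4) sg[OF xs(4)] f(4) D0] dec_D[OF xs(5) sg[OF xs(5)] f(5) Dc] by auto
    have l1: "count_list u x1 = 1" using dec_lin[OF xs(2) sg[OF xs(2)] f(2) nb] .
    have l5: "count_list u x5 = 1" using dec_lin[OF xs(6) sg[OF xs(6)] f(6) nb] .
    have n15: "x1 \<noteq> x5"
    proof
      assume "x1 = x5"
      then have "count_list (xL ?L) x1 \<ge> 2" using x by simp
      then show False using xL_count[OF xs(2)] l1 by simp
    qed
    have x5n: "x5 \<noteq> ?e" "x5 \<noteq> ?g" using l5 Dv_cnt[OF D0] Dv_cnt[OF Dc] by auto
    have x1n: "x1 \<noteq> ?e" "x1 \<noteq> ?g" using l1 Dv_cnt[OF D0] Dv_cnt[OF Dc] by auto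
    let ?X = "{?e, x1, ?g}"
    have "filter (\<lambda>z. z \<in> ?X) u = filter (\<lambda>z. z \<in> ?X) (xL ?L)"
      by (rule filter_sub_xL) (use xs ids in \<open>auto dest: xL_set\<close>)
    also have "\<dots> = [?e, x1, ?g, ?e, ?g]" using x ids n15 x5n x1n eg by auto
    finally have "rigid S (filter (\<lambda>z. z \<in> ?X) u)" using rr[OF l1] by simp
    then show ?thesis by (rule key_DD[OF D0 Dc]) auto
  next
    assume W5: "filter (\<lambda>y. y \<in> ?L) W = [0,b,c,0,c]"
    then obtain x0 x1 x2 x3 x4 where x: "xL ?L = [x0,x1,x2,x3,x4]"
      and f: "hd (tau ?L x0) = 0" "hd (tau ?L x1) = b" "hd (tau ?L x2) = c"
             "hd (tau ?L x3) = 0" "hd (tau ?L x4) = c"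
      using dec by (auto simp: map_eq_Cons_conv)
    have xs: "x0 \<in> set (xL ?L)" "x1 \<in> set (xL ?L)" "x2 \<in> set (xL ?L)" "x3 \<in> set (xL ?L)"
      "x4 \<in> set (xL ?L)" using x by auto
    have ids: "x0 = ?e" "x2 = ?g" "x3 = ?e" "x4 = ?g"
      using dec_D[OF xs(1) sg[OF xs(1)] f(1) D0] dec_D[OF xs(3) sg[OF xs(3)] f(3) Dc]
        dec_D[OF xs(4) sg[OF xs(4)] f(4) D0] dec_D[OF xs(5) sg[OF xs(5)] f(5) Dc] by auto
    have l1: "count_list u x1 = 1" using dec_lin[OF xs(2) sg[OF xs(2)] f(2) nb] .
    let ?X = "{?e, x1, ?g}"
    have "filter (\<lambda>z. z \<in> ?X) u = filter (\<lambda>z. z \<in> ?X) (xL ?L)"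
      by (rule filter_sub_xL) (use xs ids in \<open>auto dest: xL_set\<close>)
    also have "\<dots> = [?e, x1, ?g, ?e, ?g]" using x ids by auto
    finally have "rigid S (filter (\<lambda>z. z \<in> ?X) u)" using rr[OF l1] by simp
    then show ?thesis by (rule key_DD[OF D0 Dc]) auto
  qed
qed


lemma rigid_oneD':
  assumes l0: "l0 \<in> L" "Dl l0" and nd: "\<And>l. l \<in> L \<Longrightarrow> Dl l \<Longrightarrow> l = l0"
    and af: "\<And>A B. filter (\<lambda>y. y \<in> L) W \<noteq> A @ l0 # l0 # B"
  shows "rigid S (xL L)"
proof -
  let ?x = "xL L"
  let ?d = "Dv l0"
  have dv: "?d \<in> set u" "count_list u ?d = 2" "\<sigma> ?d = [l0]" using Dv[OF l0(2)] by auto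
  have dx: "?d \<in> set ?x" unfolding xL_def tau_def using dv l0(1) by auto
  have cd: "count_list ?x ?d = 2" using xL_count[OF dx] dv by simp
  have other: "count_list ?x z = 1" if "z \<in> set ?x" "z \<noteq> ?d" for z
    using lin_var[OF that(1) nd] that xL_count[OF that(1)] by auto
  obtain pre r1 where x1: "?x = pre @ ?d # r1" and p1: "?d \<notin> set pre" using split_list_first[OF dx] by blast
  have "count_list r1 ?d = 1" using cd x1 p1 by simp
  then have "?d \<in> set r1" by (metis count_notin zero_neq_one)
  from split_list_first[OF this] obtain mid suf where r1: "r1 = mid @ ?d # suf" and p2: "?d \<notin> set mid" by blast
  have "count_list suf ?d = 0" using cd x1 p1 r1 p2 by simp
  then have p3: "?d \<notin> set suf" by (simp add: count_list_0_iff)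
  have x: "?x = pre @ ?d # mid @ ?d # suf" using x1 r1 by simp
  have dist: "distinct (pre @ mid @ suf)"
  proof (rule distinct_count1)
    fix z assume z: "z \<in> set (pre @ mid @ suf)"
    then have "z \<noteq> ?d" using p1 p2 p3 by auto
    moreover have "z \<in> set ?x" using z x by auto
    ultimately have "count_list ?x z = 1" using other by blast
    then show "count_list (pre @ mid @ suf) z \<le> 1" using x \<open>z \<noteq> ?d\<close> by simp
  qed
  have mid: "mid \<noteq> []"
  proof
    assume "mid = []"
    then have "filter (\<lambda>y. y \<in> L) W = subst (tau L) pre @ l0 # l0 # subst (tau L) suf"
      using WL[of L, symmetric] x dv l0(1) by (simp add: tau_def)
    then show False using af by blast
  qed
  show ?thesis unfolding x by (rule GEN1D[OF dist _ mid]) (use p1 p2 p3 in auto)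
qed

lemma filter_map_nth: "distinct ys \<Longrightarrow> set y' \<subseteq> {..<length ys} \<Longrightarrow> B \<subseteq> {..<length ys} \<Longrightarrow>
  filter (\<lambda>z. z \<in> nth ys ` B) (map (nth ys) y') = map (nth ys) (filter (\<lambda>z. z \<in> B) y')"
proof (induction y')
  case (Cons a y')
  have "(ys ! a \<in> nth ys ` B) = (a \<in> B)"
  proof
    assume "ys ! a \<in> nth ys ` B"
    then obtain b where b: "b \<in> B" "ys ! a = ys ! b" by auto
    then have "a = b" using Cons.prems nth_eq_iff_index_eq[of ys a b] by auto
    then show "a \<in> B" using b by simp
  qed auto
  then show ?case using Cons by auto
qed simp

lemma caseA4b:
  assumes D0: "Dl 0" and Dc: "Dl c" and nb: "\<not> Dl b" and pcb: "prec P c b"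
  shows "filter (\<lambda>y. y \<in> {0,c}) w' = filter (\<lambda>y. y \<in> {0,c}) w"
proof -
  have mem: "b \<in> set P" "c \<in> set P" using prec_mem[OF pcb] by auto
  have ne: "c \<noteq> b" "b \<noteq> 0" "c \<noteq> 0" using prec_neq[OF dP pcb] inP_ne0[OF mem(1)] inP_ne0[OF mem(2)] by auto
  let ?L = "{0,c,b}"
  have fP: "filter (\<lambda>z. z \<in> ?L) P = [c,b]"
    using filterP0[OF P0, of "{c,b}"] pcb unfolding prec_def by simp
  have T: "filter (\<lambda>z. z \<in> ?L) w = [0,c,b,0,b,c]" unfolding filter_w[of ?L P] using fP by (simp del: rev_filter)
  have wl: "filter (\<lambda>y. y \<in> ?L) p @ filter (\<lambda>y. y \<in> ?L) W @ filter (\<lambda>y. y \<in> ?L) q = [0,c,b,0,b,c]"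
    using wL[of ?L] WL[of ?L] T by simp
  have pq: "0 \<notin> set p" "0 \<notin> set q" "c \<notin> set p" "c \<notin> set q" using Dl_pq[OF D0] Dl_pq[OF Dc] by auto
  have fp: "filter (\<lambda>y. y \<in> ?L) p = []"
    by (rule pre0[of _ _ 0]) (use wl pq in auto)
  have fq: "filter (\<lambda>y. y \<in> ?L) q = []"
    by (rule suf0[of "filter (\<lambda>y. y \<in> ?L) p @ filter (\<lambda>y. y \<in> ?L) W" _ "[0,c,b,0,b]" c]) (use wl pq in auto)
  have W6: "filter (\<lambda>y. y \<in> ?L) W = [0,c,b,0,b,c]" using wl fp fq by simp
  have af: "adjfree (filter (\<lambda>y. y \<in> ?L) W)" using W6 ne by auto
  have dl: "Dl l" if "l \<in> ?L" "l \<noteq> b" for l using that D0 Dc by auto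
  have dec: "map (\<lambda>z. hd (tau ?L z)) (xL ?L) = filter (\<lambda>y. y \<in> ?L) W"
    and sg: "\<And>z. z \<in> set (xL ?L) \<Longrightarrow> tau ?L z = [hd (tau ?L z)]"
    using dec1[of b ?L, OF _ nb dl af] by auto
  let ?e = "Dv 0" and ?g = "Dv c"
  have eg: "?e \<noteq> ?g" using Dv_inj[OF D0 Dc] ne by auto
  obtain x0 x1 x2 x3 x4 x5 where x: "xL ?L = [x0,x1,x2,x3,x4,x5]"
    and f: "hd (tau ?L x0) = 0" "hd (tau ?L x1) = c" "hd (tau ?L x2) = b"
           "hd (tau ?L x3) = 0" "hd (tau ?L x4) = b" "hd (tau ?L x5) = c"
    using dec W6 by (auto simp: map_eq_Cons_conv)
  have xs: "x0 \<in> set (xL ?L)" "x1 \<in> set (xL ?L)" "x2 \<in> set (xL ?L)" "x3 \<in> set (xL ?L)"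
    "x4 \<in> set (xL ?L)" "x5 \<in> set (xL ?L)" using x by auto
  have ids: "x0 = ?e" "x1 = ?g" "x3 = ?e" "x5 = ?g"
    using dec_D[OF xs(1) sg[OF xs(1)] f(1) D0] dec_D[OF xs(2) sg[OF xs(2)] f(2) Dc]
      dec_D[OF xs(4) sg[OF xs(4)] f(4) D0] dec_D[OF xs(6) sg[OF xs(6)] f(6) Dc] by auto
  have l2: "count_list u x2 = 1" using dec_lin[OF xs(3) sg[OF xs(3)] f(3) nb] .
  have l4: "count_list u x4 = 1" using dec_lin[OF xs(5) sg[OF xs(5)] f(5) nb] .
  have n24: "x2 \<noteq> x4"
  proof
    assume "x2 = x4"
    then have "count_list (xL ?L) x2 \<ge> 2" using x by simp
    then show False using xL_count[OF xs(3)] l2 by simp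
  qed
  have xn: "x2 \<noteq> ?e" "x2 \<noteq> ?g" "x4 \<noteq> ?e" "x4 \<noteq> ?g" using l2 l4 Dv_cnt[OF D0] Dv_cnt[OF Dc] by auto
  let ?X = "{?e, ?g, x2, x4}"
  have "filter (\<lambda>z. z \<in> ?X) u = filter (\<lambda>z. z \<in> ?X) (xL ?L)"
    by (rule filter_sub_xL) (use xs ids in \<open>auto dest: xL_set\<close>)
  also have "\<dots> = [?e, ?g, x2, ?e, x4, ?g]" using x ids by auto
  also have "\<dots> = map (nth [?e, ?g, x2, x4]) [0,1,2,0,3,1]" by simp
  finally have "rigid S (filter (\<lambda>z. z \<in> ?X) u)"
    using rigid_rename[OF R8, of "[?e, ?g, x2, x4]"] eg xn n24 by simp
  then show ?thesis by (rule key_DD[OF D0 Dc]) auto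
qed

lemma adj_no_cc: "c \<noteq> d \<Longrightarrow> [c,d,d,c] \<noteq> A @ c # c # B"
proof
  assume cd: "c \<noteq> d" and e: "[c,d,d,c] = A @ c # c # B"
  have "length A \<le> 2" using arg_cong[OF e, of length] by simp
  then consider "A = []" | a1 where "A = [a1]" | a1 a2 where "A = [a1,a2]"
    by (cases A; cases "tl A"; auto)
  then show False using e cd by cases auto
qed

lemma caseA2:
  assumes D0: "Dl 0" and nc: "\<not> Dl c" and cP: "c \<in> set P"
  shows "filter (\<lambda>y. y \<in> {0,c}) w' = filter (\<lambda>y. y \<in> {0,c}) w"
proof -
  have c0: "c \<noteq> 0" using inP_ne0[OF cP] .
  have fP: "filter (\<lambda>z. z \<in> {0,c}) P = [c]"
    by (rule filter_distinct_one[OF dP]) (use cP P0 in auto)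
  have T: "filter (\<lambda>z. z \<in> {0,c}) w = [0,c,0,c]" unfolding filter_w[of "{0,c}" P] using fP by (simp del: rev_filter)
  have wl: "filter (\<lambda>y. y \<in> {0,c}) p @ filter (\<lambda>y. y \<in> {0,c}) W @ filter (\<lambda>y. y \<in> {0,c}) q = [0,c,0,c]"
    using wL[of "{0,c}"] WL[of "{0,c}"] T by simp
  have afT: "adjfree [0,c,0,c]" using c0 by auto
  have af: "adjfree (filter (\<lambda>y. y \<in> {0,c}) W)" using adjfree_mid wl afT by metis
  have "rigid S (xL {0,c})"
    by (rule rigid_oneD[of 0]) (use D0 nc af in auto)
  then show ?thesis by (rule key_rigid_xL) auto
qed

lemma caseA3:
  assumes n0: "\<not> Dl 0" and Dc: "Dl c" and cP: "c \<in> set P"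
  shows "filter (\<lambda>y. y \<in> {0,c}) w' = filter (\<lambda>y. y \<in> {0,c}) w"
proof -
  have c0: "c \<noteq> 0" using inP_ne0[OF cP] .
  have fP: "filter (\<lambda>z. z \<in> {0,c}) P = [c]"
    by (rule filter_distinct_one[OF dP]) (use cP P0 in auto)
  have T: "filter (\<lambda>z. z \<in> {0,c}) w = [0,c,0,c]" unfolding filter_w[of "{0,c}" P] using fP by (simp del: rev_filter)
  have wl: "filter (\<lambda>y. y \<in> {0,c}) p @ filter (\<lambda>y. y \<in> {0,c}) W @ filter (\<lambda>y. y \<in> {0,c}) q = [0,c,0,c]"
    using wL[of "{0,c}"] WL[of "{0,c}"] T by simp
  have afT: "adjfree [0,c,0,c]" using c0 by auto
  have af: "adjfree (filter (\<lambda>y. y \<in> {0,c}) W)" using adjfree_mid wl afT by metis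
  have "rigid S (xL {0,c})"
    by (rule rigid_oneD[of c]) (use Dc n0 af in auto)
  then show ?thesis by (rule key_rigid_xL) auto
qed

lemma caseN:
  assumes na: "\<not> Dl a" and nb: "\<not> Dl b"
  shows "filter (\<lambda>y. y \<in> {a,b}) w' = filter (\<lambda>y. y \<in> {a,b}) w"
proof -
  have "rigid S (xL {a,b})" by (rule rigid_noD) (use na nb in auto)
  then show ?thesis by (rule key_rigid_xL) auto
qed

lemma caseB2:
  assumes Dc: "Dl c" and nd: "\<not> Dl d" and pcd: "prec P c d"
  shows "filter (\<lambda>y. y \<in> {c,d}) w' = filter (\<lambda>y. y \<in> {c,d}) w"
proof -
  have mem: "c \<in> set P" "d \<in> set P" using prec_mem[OF pcd] by auto
  have ne: "c \<noteq> d" "c \<noteq> 0" "d \<noteq> 0" using prec_neq[OF dP pcd] inP_ne0[OF mem(1)] inP_ne0[OF mem(2)] by auto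
  have fP: "filter (\<lambda>z. z \<in> {c,d}) P = [c,d]" using pcd unfolding prec_def .
  have T: "filter (\<lambda>z. z \<in> {c,d}) w = [c,d,d,c]" unfolding filter_w[of "{c,d}" P] using fP ne by (simp del: rev_filter)
  have wl: "filter (\<lambda>y. y \<in> {c,d}) p @ filter (\<lambda>y. y \<in> {c,d}) W @ filter (\<lambda>y. y \<in> {c,d}) q = [c,d,d,c]"
    using wL[of "{c,d}"] WL[of "{c,d}"] T by simp
  have pq: "c \<notin> set p" "c \<notin> set q" using Dl_pq[OF Dc] by auto
  have fp: "filter (\<lambda>y. y \<in> {c,d}) p = []"
    by (rule pre0[of _ _ c]) (use wl pq in auto)
  have fq: "filter (\<lambda>y. y \<in> {c,d}) q = []"
    by (rule suf0[of "filter (\<lambda>y. y \<in> {c,d}) p @ filter (\<lambda>y. y \<in> {c,d}) W" _ "[c,d,d]" c]) (use wl pq in auto)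
  have W4: "filter (\<lambda>y. y \<in> {c,d}) W = [c,d,d,c]" using wl fp fq by simp
  have "rigid S (xL {c,d})"
    by (rule rigid_oneD'[of c]) (use Dc nd W4 adj_no_cc[OF ne(1)] in auto)
  then show ?thesis by (rule key_rigid_xL) auto
qed

lemma caseB3a:
  assumes n0: "\<not> Dl 0" and nc: "\<not> Dl c" and Dd: "Dl d" and pcd: "prec P c d"
  shows "filter (\<lambda>y. y \<in> {c,d}) w' = filter (\<lambda>y. y \<in> {c,d}) w"
proof -
  have mem: "c \<in> set P" "d \<in> set P" using prec_mem[OF pcd] by auto
  have ne: "c \<noteq> d" "c \<noteq> 0" "d \<noteq> 0" using prec_neq[OF dP pcd] inP_ne0[OF mem(1)] inP_ne0[OF mem(2)] by auto
  let ?L = "{0,c,d}"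
  have fP: "filter (\<lambda>z. z \<in> ?L) P = [c,d]"
    using filterP0[OF P0, of "{c,d}"] pcd unfolding prec_def by simp
  have T: "filter (\<lambda>z. z \<in> ?L) w = [0,c,d,0,d,c]" unfolding filter_w[of ?L P] using fP by (simp del: rev_filter)
  have wl: "filter (\<lambda>y. y \<in> ?L) p @ filter (\<lambda>y. y \<in> ?L) W @ filter (\<lambda>y. y \<in> ?L) q = [0,c,d,0,d,c]"
    using wL[of ?L] WL[of ?L] T by simp
  have afT: "adjfree [0,c,d,0,d,c]" using ne by auto
  have af: "adjfree (filter (\<lambda>y. y \<in> ?L) W)" using adjfree_mid wl afT by metis
  have "rigid S (xL ?L)"
    by (rule rigid_oneD[of d]) (use Dd n0 nc af in auto)
  then show ?thesis by (rule key_rigid_xL) auto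
qed

lemma caseB3b:
  assumes D0: "Dl 0" and nc: "\<not> Dl c" and Dd: "Dl d" and pcd: "prec P c d"
  shows "filter (\<lambda>y. y \<in> {c,d}) w' = filter (\<lambda>y. y \<in> {c,d}) w"
proof -
  have mem: "c \<in> set P" "d \<in> set P" using prec_mem[OF pcd] by auto
  have ne: "c \<noteq> d" "c \<noteq> 0" "d \<noteq> 0" using prec_neq[OF dP pcd] inP_ne0[OF mem(1)] inP_ne0[OF mem(2)] by auto
  let ?L = "{0,c,d}"
  have fP: "filter (\<lambda>z. z \<in> ?L) P = [c,d]"
    using filterP0[OF P0, of "{c,d}"] pcd unfolding prec_def by simp
  have T: "filter (\<lambda>z. z \<in> ?L) w = [0,c,d,0,d,c]" unfolding filter_w[of ?L P] using fP by (simp del: rev_filter)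
  have wl: "filter (\<lambda>y. y \<in> ?L) p @ filter (\<lambda>y. y \<in> ?L) W @ filter (\<lambda>y. y \<in> ?L) q = [0,c,d,0,d,c]"
    using wL[of ?L] WL[of ?L] T by simp
  have pq: "0 \<notin> set p" "0 \<notin> set q" "d \<notin> set p" "d \<notin> set q" using Dl_pq[OF D0] Dl_pq[OF Dd] by auto
  have fp: "filter (\<lambda>y. y \<in> ?L) p = []"
    by (rule pre0[of _ _ 0]) (use wl pq in auto)
  have "filter (\<lambda>y. y \<in> ?L) q = [] \<or> filter (\<lambda>y. y \<in> ?L) q = [c]"
    by (rule suf1[of "filter (\<lambda>y. y \<in> ?L) p @ filter (\<lambda>y. y \<in> ?L) W" _ "[0,c,d,0]" d]) (use wl pq in auto)
  then have WLc: "filter (\<lambda>y. y \<in> ?L) W = [0,c,d,0,d,c] \<or> filter (\<lambda>y. y \<in> ?L) W = [0,c,d,0,d]"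
    using wl fp by auto
  have afT: "adjfree [0,c,d,0,d,c]" using ne by auto
  have af: "adjfree (filter (\<lambda>y. y \<in> ?L) W)" using adjfree_mid[of "filter (\<lambda>y. y \<in> ?L) p"] wl afT by metis
  have dl: "Dl l" if "l \<in> ?L" "l \<noteq> c" for l using that D0 Dd by auto
  have dec: "map (\<lambda>z. hd (tau ?L z)) (xL ?L) = filter (\<lambda>y. y \<in> ?L) W"
    and sg: "\<And>z. z \<in> set (xL ?L) \<Longrightarrow> tau ?L z = [hd (tau ?L z)]"
    using dec1[of c ?L, OF _ nc dl af] by auto
  let ?e = "Dv 0" and ?g = "Dv d"
  have eg: "?e \<noteq> ?g" using Dv_inj[OF D0 Dd] ne by auto
  have "rigid S (xL ?L)"
  proof -
    from WLc show ?thesis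
    proof
      assume W6: "filter (\<lambda>y. y \<in> ?L) W = [0,c,d,0,d,c]"
      then obtain x0 x1 x2 x3 x4 x5 where x: "xL ?L = [x0,x1,x2,x3,x4,x5]"
        and f: "hd (tau ?L x0) = 0" "hd (tau ?L x1) = c" "hd (tau ?L x2) = d"
               "hd (tau ?L x3) = 0" "hd (tau ?L x4) = d" "hd (tau ?L x5) = c"
        using dec by (auto simp: map_eq_Cons_conv)
      have xs: "x0 \<in> set (xL ?L)" "x1 \<in> set (xL ?L)" "x2 \<in> set (xL ?L)" "x3 \<in> set (xL ?L)"
        "x4 \<in> set (xL ?L)" "x5 \<in> set (xL ?L)" using x by auto
      have ids: "x0 = ?e" "x2 = ?g" "x3 = ?e" "x4 = ?g"
        using dec_D[OF xs(1) sg[OF xs(1)] f(1) D0] dec_D[OF xs(3) sg[OF xs(3)] f(3) Dd]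
          dec_D[OF xs(4) sg[OF xs(4)] f(4) D0] dec_D[OF xs(5) sg[OF xs(5)] f(5) Dd] by auto
      have l1: "count_list u x1 = 1" using dec_lin[OF xs(2) sg[OF xs(2)] f(2) nc] .
      have l5: "count_list u x5 = 1" using dec_lin[OF xs(6) sg[OF xs(6)] f(6) nc] .
      have n15: "x1 \<noteq> x5"
      proof
        assume "x1 = x5"
        then have "count_list (xL ?L) x1 \<ge> 2" using x by simp
        then show False using xL_count[OF xs(2)] l1 by simp
      qed
      have xn: "x1 \<noteq> ?e" "x1 \<noteq> ?g" "x5 \<noteq> ?e" "x5 \<noteq> ?g" using l1 l5 Dv_cnt[OF D0] Dv_cnt[OF Dd] by auto
      have "xL ?L = map (nth [?e, x1, ?g, x5]) [0,1,2,0,2,3]" using x ids by simp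
      then show ?thesis using rigid_rename[OF R7, of "[?e, x1, ?g, x5]"] eg xn n15 by simp
    next
      assume W5: "filter (\<lambda>y. y \<in> ?L) W = [0,c,d,0,d]"
      then obtain x0 x1 x2 x3 x4 where x: "xL ?L = [x0,x1,x2,x3,x4]"
        and f: "hd (tau ?L x0) = 0" "hd (tau ?L x1) = c" "hd (tau ?L x2) = d"
               "hd (tau ?L x3) = 0" "hd (tau ?L x4) = d"
        using dec by (auto simp: map_eq_Cons_conv)
      have xs: "x0 \<in> set (xL ?L)" "x1 \<in> set (xL ?L)" "x2 \<in> set (xL ?L)" "x3 \<in> set (xL ?L)"
        "x4 \<in> set (xL ?L)" using x by auto
      have ids: "x0 = ?e" "x2 = ?g" "x3 = ?e" "x4 = ?g"
        using dec_D[OF xs(1) sg[OF xs(1)] f(1) D0] dec_D[OF xs(3) sg[OF xs(3)] f(3) Dd]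
          dec_D[OF xs(4) sg[OF xs(4)] f(4) D0] dec_D[OF xs(5) sg[OF xs(5)] f(5) Dd] by auto
      have l1: "count_list u x1 = 1" using dec_lin[OF xs(2) sg[OF xs(2)] f(2) nc] .
      have xn: "x1 \<noteq> ?e" "x1 \<noteq> ?g" using l1 Dv_cnt[OF D0] Dv_cnt[OF Dd] by auto
      have "xL ?L = map (nth [?e, x1, ?g]) [0,1,2,0,2]" using x ids by simp
      then show ?thesis using rigid_rename[OF R4, of "[?e, x1, ?g]"] eg xn by simp
    qed
  qed
  then show ?thesis by (rule key_rigid_xL) auto
qed


lemma caseB4a:
  assumes n0: "\<not> Dl 0" and Dc: "Dl c" and Dd: "Dl d" and pcd: "prec P c d"
  shows "filter (\<lambda>y. y \<in> {c,d}) w' = filter (\<lambda>y. y \<in> {c,d}) w"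
proof -
  have mem: "c \<in> set P" "d \<in> set P" using prec_mem[OF pcd] by auto
  have ne: "c \<noteq> d" "c \<noteq> 0" "d \<noteq> 0" using prec_neq[OF dP pcd] inP_ne0[OF mem(1)] inP_ne0[OF mem(2)] by auto
  let ?L = "{0,c,d}"
  have fP: "filter (\<lambda>z. z \<in> ?L) P = [c,d]"
    using filterP0[OF P0, of "{c,d}"] pcd unfolding prec_def by simp
  have T: "filter (\<lambda>z. z \<in> ?L) w = [0,c,d,0,d,c]" unfolding filter_w[of ?L P] using fP by (simp del: rev_filter)
  have wl: "filter (\<lambda>y. y \<in> ?L) p @ filter (\<lambda>y. y \<in> ?L) W @ filter (\<lambda>y. y \<in> ?L) q = [0,c,d,0,d,c]"
    using wL[of ?L] WL[of ?L] T by simp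
  have pq: "c \<notin> set p" "c \<notin> set q" using Dl_pq[OF Dc] by auto
  have "filter (\<lambda>y. y \<in> ?L) p = [] \<or> filter (\<lambda>y. y \<in> ?L) p = [0]"
    by (rule pre1[of _ _ 0 c]) (use wl pq in auto)
  moreover have fq: "filter (\<lambda>y. y \<in> ?L) q = []"
    by (rule suf0[of "filter (\<lambda>y. y \<in> ?L) p @ filter (\<lambda>y. y \<in> ?L) W" _ "[0,c,d,0,d]" c]) (use wl pq in auto)
  ultimately have WLc: "filter (\<lambda>y. y \<in> ?L) W = [0,c,d,0,d,c] \<or> filter (\<lambda>y. y \<in> ?L) W = [c,d,0,d,c]"
    using wl by auto
  have afT: "adjfree [0,c,d,0,d,c]" using ne by auto
  have af: "adjfree (filter (\<lambda>y. y \<in> ?L) W)" using adjfree_mid[of "filter (\<lambda>y. y \<in> ?L) p"] wl afT by metis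
  have dl: "Dl l" if "l \<in> ?L" "l \<noteq> 0" for l using that Dc Dd by auto
  have dec: "map (\<lambda>z. hd (tau ?L z)) (xL ?L) = filter (\<lambda>y. y \<in> ?L) W"
    and sg: "\<And>z. z \<in> set (xL ?L) \<Longrightarrow> tau ?L z = [hd (tau ?L z)]"
    using dec1[of 0 ?L, OF _ n0 dl af] by auto
  let ?g = "Dv c" and ?h = "Dv d"
  have gh: "?g \<noteq> ?h" using Dv_inj[OF Dc Dd] ne by auto
  have rr: "rigid S [?g, ?h, t, ?h, ?g]" if "count_list u t = 1" for t
  proof -
    have "t \<noteq> ?g" "t \<noteq> ?h" using that Dv_cnt[OF Dc] Dv_cnt[OF Dd] by auto
    then show ?thesis using rigid_rename[OF R3, of "[?g, ?h, t]"] gh by simp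
  qed
  from WLc obtain t where t: "count_list u t = 1" and
    fX: "filter (\<lambda>z. z \<in> {?g, ?h, t}) u = [?g, ?h, t, ?h, ?g]"
  proof
    assume W6: "filter (\<lambda>y. y \<in> ?L) W = [0,c,d,0,d,c]"
    then obtain x0 x1 x2 x3 x4 x5 where x: "xL ?L = [x0,x1,x2,x3,x4,x5]"
      and f: "hd (tau ?L x0) = 0" "hd (tau ?L x1) = c" "hd (tau ?L x2) = d"
             "hd (tau ?L x3) = 0" "hd (tau ?L x4) = d" "hd (tau ?L x5) = c"
      using dec by (auto simp: map_eq_Cons_conv)
    have xs: "x0 \<in> set (xL ?L)" "x1 \<in> set (xL ?L)" "x2 \<in> set (xL ?L)" "x3 \<in> set (xL ?L)"
      "x4 \<in> set (xL ?L)" "x5 \<in> set (xL ?L)" using x by auto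
    have ids: "x1 = ?g" "x2 = ?h" "x4 = ?h" "x5 = ?g"
      using dec_D[OF xs(2) sg[OF xs(2)] f(2) Dc] dec_D[OF xs(3) sg[OF xs(3)] f(3) Dd]
        dec_D[OF xs(5) sg[OF xs(5)] f(5) Dd] dec_D[OF xs(6) sg[OF xs(6)] f(6) Dc] by auto
    have l0: "count_list u x0 = 1" using dec_lin[OF xs(1) sg[OF xs(1)] f(1) n0] .
    have l3: "count_list u x3 = 1" using dec_lin[OF xs(4) sg[OF xs(4)] f(4) n0] .
    have n03: "x0 \<noteq> x3"
    proof
      assume "x0 = x3"
      then have "count_list (xL ?L) x0 \<ge> 2" using x by simp
      then show False using xL_count[OF xs(1)] l0 by simp
    qed
    have xn: "x0 \<noteq> ?g" "x0 \<noteq> ?h" using l0 Dv_cnt[OF Dc] Dv_cnt[OF Dd] by auto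
    have "filter (\<lambda>z. z \<in> {?g, ?h, x3}) u = filter (\<lambda>z. z \<in> {?g, ?h, x3}) (xL ?L)"
      by (rule filter_sub_xL) (use xs ids in \<open>auto dest: xL_set\<close>)
    also have "\<dots> = [?g, ?h, x3, ?h, ?g]" using x ids n03 xn by auto
    finally show ?thesis using that l3 by blast
  next
    assume W5: "filter (\<lambda>y. y \<in> ?L) W = [c,d,0,d,c]"
    then obtain x0 x1 x2 x3 x4 where x: "xL ?L = [x0,x1,x2,x3,x4]"
      and f: "hd (tau ?L x0) = c" "hd (tau ?L x1) = d" "hd (tau ?L x2) = 0"
             "hd (tau ?L x3) = d" "hd (tau ?L x4) = c"
      using dec by (auto simp: map_eq_Cons_conv)
    have xs: "x0 \<in> set (xL ?L)" "x1 \<in> set (xL ?L)" "x2 \<in> set (xL ?L)" "x3 \<in> set (xL ?L)"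
      "x4 \<in> set (xL ?L)" using x by auto
    have ids: "x0 = ?g" "x1 = ?h" "x3 = ?h" "x4 = ?g"
      using dec_D[OF xs(1) sg[OF xs(1)] f(1) Dc] dec_D[OF xs(2) sg[OF xs(2)] f(2) Dd]
        dec_D[OF xs(4) sg[OF xs(4)] f(4) Dd] dec_D[OF xs(5) sg[OF xs(5)] f(5) Dc] by auto
    have l2: "count_list u x2 = 1" using dec_lin[OF xs(3) sg[OF xs(3)] f(3) n0] .
    have "filter (\<lambda>z. z \<in> {?g, ?h, x2}) u = filter (\<lambda>z. z \<in> {?g, ?h, x2}) (xL ?L)"
      by (rule filter_sub_xL) (use xs ids in \<open>auto dest: xL_set\<close>)
    also have "\<dots> = [?g, ?h, x2, ?h, ?g]" using x ids by auto
    finally show ?thesis using that l2 by blast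
  qed
  have "rigid S (filter (\<lambda>z. z \<in> {?g, ?h, t}) u)" using fX rr[OF t] by simp
  then show ?thesis by (rule key_DD[OF Dc Dd]) auto
qed

lemma caseB4b:
  assumes D0: "Dl 0" and Dc: "Dl c" and Dd: "Dl d" and nb: "\<not> Dl b"
    and pcd: "prec P c d" and pdb: "prec P d b"
  shows "filter (\<lambda>y. y \<in> {c,d}) w' = filter (\<lambda>y. y \<in> {c,d}) w"
proof -
  have mem: "c \<in> set P" "d \<in> set P" "b \<in> set P" using prec_mem[OF pcd] prec_mem[OF pdb] by auto
  have pcb: "prec P c b" using prec_trans[OF dP pcd pdb] .
  have ne: "c \<noteq> d" "d \<noteq> b" "c \<noteq> b" "c \<noteq> 0" "d \<noteq> 0" "b \<noteq> 0"
    using prec_neq[OF dP pcd] prec_neq[OF dP pdb] prec_neq[OF dP pcb]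
      inP_ne0[OF mem(1)] inP_ne0[OF mem(2)] inP_ne0[OF mem(3)] by auto
  let ?L = "{0,c,d,b}"
  have fP: "filter (\<lambda>z. z \<in> ?L) P = [c,d,b]"
    using filterP0[OF P0, of "{c,d,b}"] filter_P3[OF dP pcd pdb] by simp
  have T: "filter (\<lambda>z. z \<in> ?L) w = [0,c,d,b,0,b,d,c]" unfolding filter_w[of ?L P] using fP by (simp del: rev_filter)
  have wl: "filter (\<lambda>y. y \<in> ?L) p @ filter (\<lambda>y. y \<in> ?L) W @ filter (\<lambda>y. y \<in> ?L) q = [0,c,d,b,0,b,d,c]"
    using wL[of ?L] WL[of ?L] T by simp
  have pq: "0 \<notin> set p" "c \<notin> set q" using Dl_pq[OF D0] Dl_pq[OF Dc] by auto
  have fp: "filter (\<lambda>y. y \<in> ?L) p = []"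
    by (rule pre0[of _ _ 0]) (use wl pq in auto)
  have fq: "filter (\<lambda>y. y \<in> ?L) q = []"
    by (rule suf0[of "filter (\<lambda>y. y \<in> ?L) p @ filter (\<lambda>y. y \<in> ?L) W" _ "[0,c,d,b,0,b,d]" c]) (use wl pq in auto)
  have W8: "filter (\<lambda>y. y \<in> ?L) W = [0,c,d,b,0,b,d,c]" using wl fp fq by simp
  have af: "adjfree (filter (\<lambda>y. y \<in> ?L) W)" using W8 ne by auto
  have dl: "Dl l" if "l \<in> ?L" "l \<noteq> b" for l using that D0 Dc Dd by auto
  have dec: "map (\<lambda>z. hd (tau ?L z)) (xL ?L) = filter (\<lambda>y. y \<in> ?L) W"
    and sg: "\<And>z. z \<in> set (xL ?L) \<Longrightarrow> tau ?L z = [hd (tau ?L z)]"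
    using dec1[of b ?L, OF _ nb dl af] by auto
  let ?g = "Dv c" and ?h = "Dv d"
  have gh: "?g \<noteq> ?h" using Dv_inj[OF Dc Dd] ne by auto
  obtain x0 x1 x2 x3 x4 x5 x6 x7 where x: "xL ?L = [x0,x1,x2,x3,x4,x5,x6,x7]"
    and f: "hd (tau ?L x1) = c" "hd (tau ?L x2) = d" "hd (tau ?L x3) = b"
      "hd (tau ?L x5) = b" "hd (tau ?L x6) = d" "hd (tau ?L x7) = c"
    using dec W8 by (auto simp: map_eq_Cons_conv)
  have xs: "x1 \<in> set (xL ?L)" "x2 \<in> set (xL ?L)" "x3 \<in> set (xL ?L)"
    "x5 \<in> set (xL ?L)" "x6 \<in> set (xL ?L)" "x7 \<in> set (xL ?L)" using x by auto
  have ids: "x1 = ?g" "x2 = ?h" "x6 = ?h" "x7 = ?g"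
    using dec_D[OF xs(1) sg[OF xs(1)] f(1) Dc] dec_D[OF xs(2) sg[OF xs(2)] f(2) Dd]
      dec_D[OF xs(5) sg[OF xs(5)] f(5) Dd] dec_D[OF xs(6) sg[OF xs(6)] f(6) Dc] by auto
  have l3: "count_list u x3 = 1" using dec_lin[OF xs(3) sg[OF xs(3)] f(3) nb] .
  have l5: "count_list u x5 = 1" using dec_lin[OF xs(4) sg[OF xs(4)] f(4) nb] .
  have n35: "x3 \<noteq> x5"
  proof
    assume "x3 = x5"
    then have "count_list (xL ?L) x3 \<ge> 2" using x by simp
    then show False using xL_count[OF xs(3)] l3 by simp
  qed
  have x0e: "x0 = Dv 0" "x4 = Dv 0"
  proof -
    have x0s: "x0 \<in> set (xL ?L)" "x4 \<in> set (xL ?L)" using x by auto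
    have "hd (tau ?L x0) = 0" "hd (tau ?L x4) = 0" using dec W8 x by auto
    then show "x0 = Dv 0" "x4 = Dv 0" using dec_D[OF x0s(1) sg[OF x0s(1)] _ D0] dec_D[OF x0s(2) sg[OF x0s(2)] _ D0] by auto
  qed
  have xn: "x3 \<noteq> ?g" "x3 \<noteq> ?h" "x5 \<noteq> ?g" "x5 \<noteq> ?h" "Dv 0 \<noteq> ?g" "Dv 0 \<noteq> ?h"
    "x3 \<noteq> Dv 0" "x5 \<noteq> Dv 0"
    using l3 l5 Dv_cnt[OF Dc] Dv_cnt[OF Dd] Dv_cnt[OF D0] Dv_inj[OF D0 Dc] Dv_inj[OF D0 Dd] ne by auto
  have "filter (\<lambda>z. z \<in> {?g, ?h, x3}) u = filter (\<lambda>z. z \<in> {?g, ?h, x3}) (xL ?L)"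
    by (rule filter_sub_xL) (use xs ids in \<open>auto dest: xL_set\<close>)
  also have "\<dots> = [?g, ?h, x3, ?h, ?g]" using x ids x0e n35 xn by auto
  finally have "rigid S (filter (\<lambda>z. z \<in> {?g, ?h, x3}) u)"
    using rigid_rename[OF R3, of "[?g, ?h, x3]"] gh xn by simp
  then show ?thesis by (rule key_DD[OF Dc Dd]) auto
qed

lemma caseB4c:
  assumes D0: "Dl 0" and Dc: "Dl c" and Dd: "Dl d" and nb: "\<not> Dl b"
    and pcb: "prec P c b" and pbd: "prec P b d"
  shows "filter (\<lambda>y. y \<in> {c,d}) w' = filter (\<lambda>y. y \<in> {c,d}) w"
proof -
  have mem: "c \<in> set P" "b \<in> set P" "d \<in> set P" using prec_mem[OF pcb] prec_mem[OF pbd] by auto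
  have pcd: "prec P c d" using prec_trans[OF dP pcb pbd] .
  have ne: "c \<noteq> d" "d \<noteq> b" "c \<noteq> b" "c \<noteq> 0" "d \<noteq> 0" "b \<noteq> 0"
    using prec_neq[OF dP pcd] prec_neq[OF dP pbd] prec_neq[OF dP pcb]
      inP_ne0[OF mem(1)] inP_ne0[OF mem(2)] inP_ne0[OF mem(3)] by auto
  let ?L = "{0,c,b,d}"
  have fP: "filter (\<lambda>z. z \<in> ?L) P = [c,b,d]"
    using filterP0[OF P0, of "{c,b,d}"] filter_P3[OF dP pcb pbd] by simp
  have T: "filter (\<lambda>z. z \<in> ?L) w = [0,c,b,d,0,d,b,c]" unfolding filter_w[of ?L P] using fP by (simp del: rev_filter)
  have wl: "filter (\<lambda>y. y \<in> ?L) p @ filter (\<lambda>y. y \<in> ?L) W @ filter (\<lambda>y. y \<in> ?L) q = [0,c,b,d,0,d,b,c]"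
    using wL[of ?L] WL[of ?L] T by simp
  have pq: "0 \<notin> set p" "c \<notin> set q" using Dl_pq[OF D0] Dl_pq[OF Dc] by auto
  have fp: "filter (\<lambda>y. y \<in> ?L) p = []"
    by (rule pre0[of _ _ 0]) (use wl pq in auto)
  have fq: "filter (\<lambda>y. y \<in> ?L) q = []"
    by (rule suf0[of "filter (\<lambda>y. y \<in> ?L) p @ filter (\<lambda>y. y \<in> ?L) W" _ "[0,c,b,d,0,d,b]" c]) (use wl pq in auto)
  have W8: "filter (\<lambda>y. y \<in> ?L) W = [0,c,b,d,0,d,b,c]" using wl fp fq by simp
  have af: "adjfree (filter (\<lambda>y. y \<in> ?L) W)" using W8 ne by auto
  have dl: "Dl l" if "l \<in> ?L" "l \<noteq> b" for l using that D0 Dc Dd by auto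
  have dec: "map (\<lambda>z. hd (tau ?L z)) (xL ?L) = filter (\<lambda>y. y \<in> ?L) W"
    and sg: "\<And>z. z \<in> set (xL ?L) \<Longrightarrow> tau ?L z = [hd (tau ?L z)]"
    using dec1[of b ?L, OF _ nb dl af] by auto
  let ?e = "Dv 0" and ?g = "Dv c" and ?h = "Dv d"
  obtain x0 x1 x2 x3 x4 x5 x6 x7 where x: "xL ?L = [x0,x1,x2,x3,x4,x5,x6,x7]"
    and f: "hd (tau ?L x0) = 0" "hd (tau ?L x1) = c" "hd (tau ?L x2) = b" "hd (tau ?L x3) = d"
      "hd (tau ?L x4) = 0" "hd (tau ?L x5) = d" "hd (tau ?L x6) = b" "hd (tau ?L x7) = c"
    using dec W8 by (auto simp: map_eq_Cons_conv)
  have xs: "x0 \<in> set (xL ?L)" "x1 \<in> set (xL ?L)" "x2 \<in> set (xL ?L)" "x3 \<in> set (xL ?L)"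
    "x4 \<in> set (xL ?L)" "x5 \<in> set (xL ?L)" "x6 \<in> set (xL ?L)" "x7 \<in> set (xL ?L)" using x by auto
  have ids: "x0 = ?e" "x1 = ?g" "x3 = ?h" "x4 = ?e" "x5 = ?h" "x7 = ?g"
    using dec_D[OF xs(1) sg[OF xs(1)] f(1) D0] dec_D[OF xs(2) sg[OF xs(2)] f(2) Dc]
      dec_D[OF xs(4) sg[OF xs(4)] f(4) Dd] dec_D[OF xs(5) sg[OF xs(5)] f(5) D0]
      dec_D[OF xs(6) sg[OF xs(6)] f(6) Dd] dec_D[OF xs(8) sg[OF xs(8)] f(8) Dc] by auto
  have l2: "count_list u x2 = 1" using dec_lin[OF xs(3) sg[OF xs(3)] f(3) nb] .
  have l6: "count_list u x6 = 1" using dec_lin[OF xs(7) sg[OF xs(7)] f(7) nb] .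
  have n26: "x2 \<noteq> x6"
  proof
    assume "x2 = x6"
    then have "count_list (xL ?L) x2 \<ge> 2" using x by simp
    then show False using xL_count[OF xs(3)] l2 by simp
  qed
  have xn: "x2 \<noteq> ?e" "x2 \<noteq> ?g" "x2 \<noteq> ?h" "x6 \<noteq> ?e" "x6 \<noteq> ?g" "x6 \<noteq> ?h"
    "?e \<noteq> ?g" "?e \<noteq> ?h" "?g \<noteq> ?h"
    using l2 l6 Dv_cnt[OF Dc] Dv_cnt[OF Dd] Dv_cnt[OF D0] Dv_inj[OF D0 Dc] Dv_inj[OF D0 Dd] Dv_inj[OF Dc Dd] ne by auto
  let ?X = "{z. tau ?L z \<noteq> []}"
  have "filter (\<lambda>z. z \<in> ?X) u = xL ?L" unfolding xL_def by simp
  also have "\<dots> = map (nth [?e, ?g, x2, ?h, x6]) [0,1,2,3,0,3,4,1]" using x ids by simp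
  finally have "rigid S (filter (\<lambda>z. z \<in> ?X) u)"
    using rigid_rename[OF R9, of "[?e, ?g, x2, ?h, x6]"] xn n26 by simp
  then show ?thesis by (rule key_DD[OF Dc Dd]) (use tau_Dv Dc Dd in auto)
qed

lemma caseB4d:
  assumes D0: "Dl 0" and Dc: "Dl c" and Dd: "Dl d" and nb: "\<not> Dl b"
    and pbc: "prec P b c" and pcd: "prec P c d"
  shows "filter (\<lambda>y. y \<in> {c,d}) w' = [c,d,d,c] \<or> filter (\<lambda>y. y \<in> {c,d}) w' = [d,c,c,d]"
proof -
  have mem: "b \<in> set P" "c \<in> set P" "d \<in> set P" using prec_mem[OF pbc] prec_mem[OF pcd] by auto
  have pbd: "prec P b d" using prec_trans[OF dP pbc pcd] .
  have ne: "c \<noteq> d" "b \<noteq> c" "b \<noteq> d" "c \<noteq> 0" "d \<noteq> 0" "b \<noteq> 0"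
    using prec_neq[OF dP pcd] prec_neq[OF dP pbc] prec_neq[OF dP pbd]
      inP_ne0[OF mem(2)] inP_ne0[OF mem(3)] inP_ne0[OF mem(1)] by auto
  let ?L = "{0,b,c,d}"
  have fP: "filter (\<lambda>z. z \<in> ?L) P = [b,c,d]"
    using filterP0[OF P0, of "{b,c,d}"] filter_P3[OF dP pbc pcd] by simp
  have T: "filter (\<lambda>z. z \<in> ?L) w = [0,b,c,d,0,d,c,b]" unfolding filter_w[of ?L P] using fP by (simp del: rev_filter)
  have wl: "filter (\<lambda>y. y \<in> ?L) p @ filter (\<lambda>y. y \<in> ?L) W @ filter (\<lambda>y. y \<in> ?L) q = [0,b,c,d,0,d,c,b]"
    using wL[of ?L] WL[of ?L] T by simp
  have pq: "0 \<notin> set p" "c \<notin> set q" using Dl_pq[OF D0] Dl_pq[OF Dc] by auto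
  have fp: "filter (\<lambda>y. y \<in> ?L) p = []"
    by (rule pre0[of _ _ 0]) (use wl pq in auto)
  have "filter (\<lambda>y. y \<in> ?L) q = [] \<or> filter (\<lambda>y. y \<in> ?L) q = [b]"
    by (rule suf1[of "filter (\<lambda>y. y \<in> ?L) p @ filter (\<lambda>y. y \<in> ?L) W" _ "[0,b,c,d,0,d]" c]) (use wl pq in auto)
  then have WLc: "filter (\<lambda>y. y \<in> ?L) W = [0,b,c,d,0,d,c,b] \<or> filter (\<lambda>y. y \<in> ?L) W = [0,b,c,d,0,d,c]"
    using wl fp by auto
  have afT: "adjfree [0,b,c,d,0,d,c,b]" using ne by auto
  have af: "adjfree (filter (\<lambda>y. y \<in> ?L) W)" using adjfree_mid[of "filter (\<lambda>y. y \<in> ?L) p"] wl afT by metis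
  have dl: "Dl l" if "l \<in> ?L" "l \<noteq> b" for l using that D0 Dc Dd by auto
  have dec: "map (\<lambda>z. hd (tau ?L z)) (xL ?L) = filter (\<lambda>y. y \<in> ?L) W"
    and sg: "\<And>z. z \<in> set (xL ?L) \<Longrightarrow> tau ?L z = [hd (tau ?L z)]"
    using dec1[of b ?L, OF _ nb dl af] by auto
  let ?e = "Dv 0" and ?g = "Dv c" and ?h = "Dv d"
  have dd: "?e \<noteq> ?g" "?e \<noteq> ?h" "?g \<noteq> ?h"
    using Dv_inj[OF D0 Dc] Dv_inj[OF D0 Dd] Dv_inj[OF Dc Dd] ne by auto
  have pre7: "x0 = ?e \<and> x2 = ?g \<and> x3 = ?h \<and> x4 = ?e \<and> x5 = ?h \<and> x6 = ?g \<and> count_list u x1 = 1"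
    if x: "take 7 (xL ?L) = [x0,x1,x2,x3,x4,x5,x6]"
    and f: "hd (tau ?L x0) = 0" "hd (tau ?L x1) = b" "hd (tau ?L x2) = c" "hd (tau ?L x3) = d"
      "hd (tau ?L x4) = 0" "hd (tau ?L x5) = d" "hd (tau ?L x6) = c" for x0 x1 x2 x3 x4 x5 x6
  proof -
    have "set (take 7 (xL ?L)) \<subseteq> set (xL ?L)" by (rule set_take_subset)
    then have xs: "x0 \<in> set (xL ?L)" "x1 \<in> set (xL ?L)" "x2 \<in> set (xL ?L)" "x3 \<in> set (xL ?L)"
      "x4 \<in> set (xL ?L)" "x5 \<in> set (xL ?L)" "x6 \<in> set (xL ?L)" using x by auto
    show ?thesis
      using dec_D[OF xs(1) sg[OF xs(1)] f(1) D0] dec_D[OF xs(3) sg[OF xs(3)] f(3) Dc]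
      dec_D[OF xs(4) sg[OF xs(4)] f(4) Dd] dec_D[OF xs(5) sg[OF xs(5)] f(5) D0]
      dec_D[OF xs(6) sg[OF xs(6)] f(6) Dd] dec_D[OF xs(7) sg[OF xs(7)] f(7) Dc]
      dec_lin[OF xs(2) sg[OF xs(2)] f(2) nb] by auto
  qed
  obtain s where sl: "count_list u s = 1" and
    fX: "filter (\<lambda>z. z \<in> {?e, s, ?g, ?h}) u = [?e, s, ?g, ?h, ?e, ?h, ?g]"
  proof -
    from WLc show ?thesis
    proof
      assume W8: "filter (\<lambda>y. y \<in> ?L) W = [0,b,c,d,0,d,c,b]"
      then obtain x0 x1 x2 x3 x4 x5 x6 x7 where x: "xL ?L = [x0,x1,x2,x3,x4,x5,x6,x7]"
        and f: "hd (tau ?L x0) = 0" "hd (tau ?L x1) = b" "hd (tau ?L x2) = c" "hd (tau ?L x3) = d"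
          "hd (tau ?L x4) = 0" "hd (tau ?L x5) = d" "hd (tau ?L x6) = c" "hd (tau ?L x7) = b"
        using dec by (auto simp: map_eq_Cons_conv)
      have P7: "x0 = ?e \<and> x2 = ?g \<and> x3 = ?h \<and> x4 = ?e \<and> x5 = ?h \<and> x6 = ?g \<and> count_list u x1 = 1"
        by (rule pre7) (use x f in auto)
      have xs7: "x7 \<in> set (xL ?L)" "x1 \<in> set (xL ?L)" using x by auto
      have l7: "count_list u x7 = 1" using dec_lin[OF xs7(1) sg[OF xs7(1)] f(8) nb] .
      have n17: "x1 \<noteq> x7"
      proof
        assume "x1 = x7"
        then have "count_list (xL ?L) x1 \<ge> 2" using x by simp
        then show False using xL_count[OF xs7(2)] P7 by simp
      qed
      have xn: "x7 \<noteq> ?e" "x7 \<noteq> ?g" "x7 \<noteq> ?h" using l7 Dv_cnt[OF Dc] Dv_cnt[OF Dd] Dv_cnt[OF D0] by auto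
      have "filter (\<lambda>z. z \<in> {?e, x1, ?g, ?h}) u = filter (\<lambda>z. z \<in> {?e, x1, ?g, ?h}) (xL ?L)"
        by (rule filter_sub_xL) (use x P7 tau_Dv[OF D0, of ?L] tau_Dv[OF Dc, of ?L] tau_Dv[OF Dd, of ?L] xL_set[of x1 ?L] in auto)
      also have "\<dots> = [?e, x1, ?g, ?h, ?e, ?h, ?g]" using x P7 n17 xn by auto
      finally show ?thesis using that P7 by blast
    next
      assume W7: "filter (\<lambda>y. y \<in> ?L) W = [0,b,c,d,0,d,c]"
      then obtain x0 x1 x2 x3 x4 x5 x6 where x: "xL ?L = [x0,x1,x2,x3,x4,x5,x6]"
        and f: "hd (tau ?L x0) = 0" "hd (tau ?L x1) = b" "hd (tau ?L x2) = c" "hd (tau ?L x3) = d"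
          "hd (tau ?L x4) = 0" "hd (tau ?L x5) = d" "hd (tau ?L x6) = c"
        using dec by (auto simp: map_eq_Cons_conv)
      have P7: "x0 = ?e \<and> x2 = ?g \<and> x3 = ?h \<and> x4 = ?e \<and> x5 = ?h \<and> x6 = ?g \<and> count_list u x1 = 1"
        by (rule pre7) (use x f in auto)
      have "filter (\<lambda>z. z \<in> {?e, x1, ?g, ?h}) u = filter (\<lambda>z. z \<in> {?e, x1, ?g, ?h}) (xL ?L)"
        by (rule filter_sub_xL) (use x P7 tau_Dv[OF D0, of ?L] tau_Dv[OF Dc, of ?L] tau_Dv[OF Dd, of ?L] xL_set[of x1 ?L] in auto)
      also have "\<dots> = [?e, x1, ?g, ?h, ?e, ?h, ?g]" using x P7 by auto
      finally show ?thesis using that P7 by blast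
    qed
  qed
  let ?ys = "[?e, s, ?g, ?h]"
  have sn: "s \<noteq> ?e" "s \<noteq> ?g" "s \<noteq> ?h" using sl Dv_cnt[OF Dc] Dv_cnt[OF Dd] Dv_cnt[OF D0] by auto
  have dys: "distinct ?ys" using sn dd by auto
  have fX': "filter (\<lambda>z. z \<in> {?e, s, ?g, ?h}) u = map (nth ?ys) [0,1,2,3,0,3,2]" using fX by simp
  have "satisfies S (filter (\<lambda>z. z \<in> {?e, s, ?g, ?h}) u) (filter (\<lambda>z. z \<in> {?e, s, ?g, ?h}) v)"
    by (rule sat_filter[OF s])
  then have "satisfies S (map (nth ?ys) [0,1,2,3,0,3,2]) (filter (\<lambda>z. z \<in> {?e, s, ?g, ?h}) v)"
    using fX' by simp
  from sat_rename_back[OF this dys] obtain y' where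
    y': "filter (\<lambda>z. z \<in> {?e, s, ?g, ?h}) v = map (nth ?ys) y'" and sy': "satisfies S [0,1,2,3,0,3,2] y'"
    by auto
  have sy'': "set y' \<subseteq> {..<length ?ys}" using content[OF sy'] by auto
  have ex: "filter (\<lambda>z. z \<in> {2,3}) y' = [2,3,3,2] \<or> filter (\<lambda>z. z \<in> {2,3}) y' = [3,2,2,3]" by (rule EX[OF sy'])
  have im: "nth ?ys ` {2,3} = {?g, ?h}" by simp
  have "filter (\<lambda>z. z \<in> {?g, ?h}) v = filter (\<lambda>z. z \<in> {?g, ?h}) (filter (\<lambda>z. z \<in> {?e, s, ?g, ?h}) v)"
    by (rule filter_filter_sub[symmetric]) auto
  also have "\<dots> = filter (\<lambda>z. z \<in> nth ?ys ` {2,3}) (map (nth ?ys) y')" using y' im by simp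
  also have "\<dots> = map (nth ?ys) (filter (\<lambda>z. z \<in> {2,3}) y')"
    by (rule filter_map_nth[OF dys sy'']) auto
  finally have fv: "filter (\<lambda>z. z \<in> {?g, ?h}) v = [?g, ?h, ?h, ?g] \<or> filter (\<lambda>z. z \<in> {?g, ?h}) v = [?h, ?g, ?g, ?h]"
    using ex by auto
  have sv: "set v \<subseteq> set u" using content[OF s] .
  have "subst (tau {c,d}) v = subst (tau {c,d}) (filter (\<lambda>z. z \<in> {?g, ?h}) v)"
    by (rule subst_filter_sub[symmetric]) (use sv vars_DD[OF Dc Dd] in blast)
  moreover have tg: "tau {c,d} ?g = [c]" "tau {c,d} ?h = [d]" using tau_Dv[OF Dc] tau_Dv[OF Dd] by auto
  ultimately have "subst (tau {c,d}) v = [c,d,d,c] \<or> subst (tau {c,d}) v = [d,c,c,d]" using fv by auto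
  moreover have "filter (\<lambda>y. y \<in> {c,d}) p = []" "filter (\<lambda>y. y \<in> {c,d}) q = []"
    by (rule filter_distinct_none, use Dl_pq[OF Dc] Dl_pq[OF Dd] in blast)+
  moreover have "filter (\<lambda>y. y \<in> {c,d}) w' =
        filter (\<lambda>y. y \<in> {c,d}) p @ subst (tau {c,d}) v @ filter (\<lambda>y. y \<in> {c,d}) q"
    by (simp add: filter_subst tau_def[abs_def])
  ultimately show ?thesis by auto
qed

end

context key begin

lemma exists_nonD: "Dl 0 \<Longrightarrow> \<exists>b\<in>set P. \<not> Dl b"
proof (rule ccontr)
  assume D0: "Dl 0" and "\<not> (\<exists>b\<in>set P. \<not> Dl b)"
  then have all: "\<And>l. l \<in> insert 0 (set P) \<Longrightarrow> Dl l" by auto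
  have inj: "inj_on Dv (insert 0 (set P))"
    by (rule inj_onI) (use all Dv_inj in blast)
  have sub: "Dv ` (insert 0 (set P)) \<subseteq> set u" using all Dv by blast
  have "card (insert 0 (set P)) \<le> card (set u)"
    using card_inj_on_le[OF inj sub] by simp
  moreover have "card (insert 0 (set P)) = length P + 1"
    using P0 distinct_card[OF dP] by simp
  ultimately show False using few by simp
qed

lemma hd_not: "prec P b c \<Longrightarrow> c \<noteq> hd P"
proof
  assume pbc: "prec P b c" and ch: "c = hd P"
  have ne: "b \<noteq> c" using prec_neq[OF dP pbc] .
  have "P \<noteq> []" using prec_mem[OF pbc] by auto
  then obtain P' where P: "P = c # P'" using ch by (cases P) auto
  have "filter (\<lambda>z. z \<in> {b,c}) P = c # filter (\<lambda>z. z \<in> {b,c}) P'" using P by simp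
  then show False using pbc ne unfolding prec_def by simp
qed

lemma pair_0c:
  assumes cP: "c \<in> set P"
  shows "filter (\<lambda>y. y \<in> {0,c}) w' = filter (\<lambda>y. y \<in> {0,c}) w"
proof (cases "Dl 0")
  case D0: True
  show ?thesis
  proof (cases "Dl c")
    case Dc: True
    obtain b where bP: "b \<in> set P" and nb: "\<not> Dl b" using exists_nonD[OF D0] by blast
    have "b \<noteq> c" using nb Dc by auto
    then have "prec P b c \<or> prec P c b" using prec_total[OF dP bP cP] by blast
    then show ?thesis
    proof
      assume "prec P b c" then show ?thesis by (rule caseA4a[OF D0 Dc nb])
    next
      assume "prec P c b" then show ?thesis by (rule caseA4b[OF D0 Dc nb])
    qed
  next
    case False then show ?thesis using caseA2[OF D0 _ cP] by blast
  qed
next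
  case n0: False
  show ?thesis
  proof (cases "Dl c")
    case True then show ?thesis using caseA3[OF n0 _ cP] by blast
  next
    case False then show ?thesis using caseN[OF n0] by blast
  qed
qed

lemma pair_cd:
  assumes pcd: "prec P c d"
  shows "filter (\<lambda>y. y \<in> {c,d}) w' = filter (\<lambda>y. y \<in> {c,d}) w \<or>
    (c \<noteq> hd P \<and> d \<noteq> hd P \<and> (filter (\<lambda>y. y \<in> {c,d}) w' = [c,d,d,c] \<or> filter (\<lambda>y. y \<in> {c,d}) w' = [d,c,c,d]))"
proof -
  have mem: "c \<in> set P" "d \<in> set P" using prec_mem[OF pcd] by auto
  show ?thesis
  proof (cases "Dl c")
    case Dc: True
    show ?thesis
    proof (cases "Dl d")
      case Dd: True
      show ?thesis
      proof (cases "Dl 0")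
        case n0: False
        then show ?thesis using caseB4a[OF n0 Dc Dd pcd] by blast
      next
        case D0: True
        show ?thesis
        proof (cases "\<exists>b. \<not> Dl b \<and> prec P d b")
          case True
          then obtain b where "\<not> Dl b" "prec P d b" by blast
          then show ?thesis using caseB4b[OF D0 Dc Dd _ pcd] by blast
        next
          case nod: False
          show ?thesis
          proof (cases "\<exists>b. \<not> Dl b \<and> prec P c b")
            case True
            then obtain b where nb: "\<not> Dl b" and pcb: "prec P c b" by blast
            have bP: "b \<in> set P" using prec_mem[OF pcb] by auto
            have "b \<noteq> d" using nb Dd by auto
            then have "prec P b d" using prec_total[OF dP bP mem(2)] nod nb by blast
            then show ?thesis using caseB4c[OF D0 Dc Dd nb pcb] by blast
          next
            case noc: False
            obtain b where bP: "b \<in> set P" and nb: "\<not> Dl b" using exists_nonD[OF D0] by blast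
            have "b \<noteq> c" using nb Dc by auto
            then have pbc: "prec P b c" using prec_total[OF dP bP mem(1)] noc nb by blast
            have pbd: "prec P b d" using prec_trans[OF dP pbc pcd] .
            show ?thesis using caseB4d[OF D0 Dc Dd nb pbc pcd] hd_not[OF pbc] hd_not[OF pbd] by blast
          qed
        qed
      qed
    next
      case False then show ?thesis using caseB2[OF Dc _ pcd] by blast
    qed
  next
    case nc: False
    show ?thesis
    proof (cases "Dl d")
      case Dd: True
      show ?thesis
      proof (cases "Dl 0")
        case True then show ?thesis using caseB3b[OF _ nc Dd pcd] by blast
      next
        case False then show ?thesis using caseB3a[OF _ nc Dd pcd] by blast
      qed
    next
      case False then show ?thesis using caseN[OF nc] by blast
    qed
  qed
qed

lemma set_w': "set w' \<subseteq> set w"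
proof -
  have sv: "set v \<subseteq> set u" using content[OF s] .
  have "set (subst \<sigma> v) \<subseteq> set (subst \<sigma> u)"
    using sv unfolding subst_def by auto
  then have "set w' \<subseteq> set (p @ W @ q)" by auto
  then show ?thesis using wdef by simp
qed

end

theorem key_step:
  fixes S :: "'a::monoid_mult itself"
  assumes h: "hyps S" and s: "satisfies S u v" and few: "card (set u) \<le> n" and n2: "n \<ge> 2"
    and w: "p @ subst \<sigma> u @ q \<in> Cset n"
  shows "p @ subst \<sigma> v @ q \<in> Cset n"
proof -
  obtain P where wP: "p @ subst \<sigma> u @ q = 0 # P @ 0 # rev P" and dP: "distinct P"
    and sP: "set P = {2..<n+2}" and hP: "hd P = 2"
    using w unfolding Cset_def by blast
  let ?N = "{z. \<sigma> z \<noteq> []}"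
  let ?u0 = "filter (\<lambda>z. z \<in> ?N) u" and ?v0 = "filter (\<lambda>z. z \<in> ?N) v"
  have eu: "subst \<sigma> ?u0 = subst \<sigma> u" and ev: "subst \<sigma> ?v0 = subst \<sigma> v"
    using subst_filter_nonempty[of \<sigma>] by simp_all
  have s0: "satisfies S ?u0 ?v0" by (rule sat_filter[OF s])
  have lP: "length P = n" using distinct_card[OF dP] sP by simp
  have P0: "0 \<notin> set P" using sP by simp
  have c0: "card (set ?u0) \<le> length P"
  proof -
    have "card (set ?u0) \<le> card (set u)" by (rule card_mono) auto
    then show ?thesis using few lP by simp
  qed
  interpret k: key S P p q ?u0 ?v0 \<sigma>
  proof (unfold_locales)
    show "\<not> satisfies S [0, 1, 0, 1] [0, 1, 1, 0]" "isoterm S [0, 1, 2, 1, 0]" "isoterm S [0, 2, 1, 0, 1]"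
      "satisfies S [0, 2, 3, 0, 3, 2] [0, 3, 2, 0, 2, 3]" using h unfolding hyps_def by auto
  qed (use s0 dP P0 lP n2 wP eu c0 in auto)
  let ?w' = "p @ subst \<sigma> v @ q"
  let ?w = "0 # P @ 0 # rev P"
  have w'eq: "p @ subst \<sigma> ?v0 @ q = ?w'" using ev by simp
  have gw: "goodpairs n ?w" using Cset_goodpairs[OF w[unfolded wP]] .
  have "goodpairs n ?w'"
    unfolding goodpairs_def
  proof (intro conjI ballI impI)
    show "set ?w' \<subseteq> insert 0 {2..<n + 2}" using k.set_w' w'eq sP by auto
  next
    fix c assume c: "c \<in> {2..<n+2}"
    have cP: "c \<in> set P" using c sP by simp
    have "filter (\<lambda>z. z \<in> {0,c}) ?w = [0,c,0,c]" using gw c unfolding goodpairs_def by blast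
    then show "filter (\<lambda>z. z \<in> {0,c}) ?w' = [0,c,0,c]" using k.pair_0c[OF cP] w'eq by simp
  next
    fix c d assume c: "c \<in> {2..<n+2}" and d: "d \<in> {2..<n+2}" and cd: "c \<noteq> d"
    have cP: "c \<in> set P" and dP': "d \<in> set P" using c d sP by auto
    have g: "filter (\<lambda>z. z \<in> {c,d}) ?w = [c,d,d,c] \<or> filter (\<lambda>z. z \<in> {c,d}) ?w = [d,c,c,d]"
      using gw c d cd unfolding goodpairs_def by blast
    from prec_total[OF dP cP dP' cd] show "filter (\<lambda>z. z \<in> {c,d}) ?w' = [c,d,d,c] \<or> filter (\<lambda>z. z \<in> {c,d}) ?w' = [d,c,c,d]"
    proof
      assume "prec P c d"
      then show ?thesis using k.pair_cd[of c d] g w'eq by auto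
    next
      assume "prec P d c"
      then show ?thesis using k.pair_cd[of d c] g w'eq by (auto simp: insert_commute)
    qed
  next
    fix c assume c: "c \<in> {2..<n+2}" and c2: "c \<noteq> 2"
    have cP: "c \<in> set P" using c sP by simp
    have twoP: "2 \<in> set P" using sP n2 by simp
    have g: "filter (\<lambda>z. z \<in> {2,c}) ?w = [2,c,c,2]" using gw c c2 unfolding goodpairs_def by blast
    have "prec P 2 c \<or> prec P c 2" using prec_total[OF dP twoP cP] c2 by auto
    then show "filter (\<lambda>z. z \<in> {2,c}) ?w' = [2,c,c,2]"
    proof
      assume "prec P 2 c"
      then show ?thesis using k.pair_cd[of 2 c] g w'eq hP by auto
    next
      assume "prec P c 2"
      then show ?thesis using k.pair_cd[of c 2] g w'eq hP by (auto simp: insert_commute)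
    qed
  qed
  then show ?thesis using goodpairs_Cset n2 by simp
qed


lemma deriv_inv:
  fixes S :: "'a::monoid_mult itself"
  assumes d: "derivable \<Sigma> u v"
    and ax: "\<And>a b. (a, b) \<in> \<Sigma> \<Longrightarrow> satisfies S a b \<and> card (set a) \<le> n \<and> card (set b) \<le> n"
    and h: "hyps S" and n2: "n \<ge> 2"
  shows "\<forall>p \<sigma> q. (p @ subst \<sigma> u @ q \<in> Cset n) = (p @ subst \<sigma> v @ q \<in> Cset n)"
  using d
proof (induction rule: derivable.induct)
  case (axiom u v)
  have a: "satisfies S u v" "card (set u) \<le> n" "card (set v) \<le> n" using ax[OF axiom] by auto
  show ?case
  proof (intro allI iffI)
    fix p \<sigma> q
    assume "p @ subst \<sigma> u @ q \<in> Cset n"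
    then show "p @ subst \<sigma> v @ q \<in> Cset n" by (rule key_step[OF h a(1) a(2) n2])
  next
    fix p \<sigma> q
    assume "p @ subst \<sigma> v @ q \<in> Cset n"
    then show "p @ subst \<sigma> u @ q \<in> Cset n" by (rule key_step[OF h sat_sym[OF a(1)] a(3) n2])
  qed
next
  case (refl u) then show ?case by simp
next
  case (sym u v) then show ?case by simp
next
  case (trans u v w) then show ?case by simp
next
  case (subst_ctx u v p' \<sigma>' q')
  show ?case
  proof (intro allI)
    fix p \<sigma> q
    have e: "p @ subst \<sigma> (p' @ subst \<sigma>' t @ q') @ q =
      (p @ subst \<sigma> p') @ subst (\<lambda>z. subst \<sigma> (\<sigma>' z)) t @ (subst \<sigma> q' @ q)" for t
      by (simp add: subst_subst)
    show "(p @ subst \<sigma> (p' @ subst \<sigma>' u @ q') @ q \<in> Cset n) = (p @ subst \<sigma> (p' @ subst \<sigma>' v @ q') @ q \<in> Cset n)"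
      unfolding e using subst_ctx.IH by blast
  qed
qed

theorem theorem5p1:
  fixes S :: "'a::monoid_mult itself"
  assumes i: "\<And>n::nat. n > 1 \<Longrightarrow>
      satisfies S ([0] @ [2..<n+2] @ [0] @ rev [2..<n+2])
                  ([0] @ rev [2..<n+2] @ [0] @ [2..<n+2])"
    and ii: "\<not> satisfies S [0, 1, 0, 1] [0, 1, 1, 0]"
    and iii: "isoterm S [0, 1, 2, 1, 0]" "isoterm S [0, 2, 1, 0, 1]"
  shows "\<not> finitely_based S"
proof
  assume "finitely_based S"
  then obtain \<Sigma> where fin: "finite \<Sigma>" and sub: "\<Sigma> \<subseteq> identities S"
    and all: "\<forall>(u, v) \<in> identities S. derivable \<Sigma> u v"
    unfolding finitely_based_def by blast
  have i2: "satisfies S [0, 2, 3, 0, 3, 2] [0, 3, 2, 0, 2, 3]"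
    using i[of 2] by (simp add: upt_rec)
  have h: "hyps S" unfolding hyps_def using ii iii i2 by blast
  define k where "k = Max (insert 0 ((\<lambda>(a, b). max (card (set a)) (card (set b))) ` \<Sigma>))"
  define n where "n = k + 2"
  have n2: "n \<ge> 2" unfolding n_def by simp
  have ax: "satisfies S a b \<and> card (set a) \<le> n \<and> card (set b) \<le> n" if ab: "(a, b) \<in> \<Sigma>" for a b
  proof -
    have m: "max (card (set a)) (card (set b)) \<in> insert 0 ((\<lambda>(a, b). max (card (set a)) (card (set b))) ` \<Sigma>)"
      using ab by force
    have "max (card (set a)) (card (set b)) \<le> k" unfolding k_def
      by (rule Max_ge) (use fin m in auto)
    moreover have "satisfies S a b" using sub ab unfolding identities_def by blast
    ultimately show ?thesis unfolding n_def by simp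
  qed
  let ?Y = "[2..<n+2]"
  let ?U = "[0] @ ?Y @ [0] @ rev ?Y" and ?V = "[0] @ rev ?Y @ [0] @ ?Y"
  have "(?U, ?V) \<in> identities S" unfolding identities_def using i[of n] n2 by simp
  then have "derivable \<Sigma> ?U ?V" using all by blast
  from deriv_inv[OF this ax h n2] have "([] @ subst (\<lambda>z. [z]) ?U @ [] \<in> Cset n) = ([] @ subst (\<lambda>z. [z]) ?V @ [] \<in> Cset n)"
    by blast
  then have eq: "(?U \<in> Cset n) = (?V \<in> Cset n)" by (simp add: subst_id)
  have "?U \<in> Cset n" unfolding Cset_def
  proof (intro CollectI exI conjI)
    show "?U = 0 # ?Y @ 0 # rev ?Y" by simp
    show "hd ?Y = 2" using n2 by (simp add: upt_rec)
    show "set ?Y = {2..<n+2}" by (rule set_upt)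
    show "distinct ?Y" by (rule distinct_upt)
  qed
  moreover have "?V \<notin> Cset n"
  proof
    assume "?V \<in> Cset n"
    then obtain P where V: "?V = 0 # P @ 0 # rev P" and sP: "set P = {2..<n+2}" and hP: "hd P = 2"
      unfolding Cset_def by blast
    have e: "rev ?Y @ 0 # ?Y = P @ 0 # rev P" using V by simp
    have z1: "0 \<notin> set (rev ?Y)" by simp
    have z2: "0 \<notin> set P" using sP by simp
    have "rev ?Y = P" using split_first_unique[OF e z1 z2] by blast
    then have "hd P = hd (rev ?Y)" by simp
    also have "\<dots> = last ?Y" by (rule hd_rev)
    also have "last ?Y = n + 1" using n2 by (simp add: last_upt)
    finally show False using hP n2 by simp
  qed
  ultimately show False using eq by blast
qed


end
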